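(* Let $V$ be an $\mathrm{FI}_G$-module which is presented in finite degree. Then for all $a\ge1$ and $i\ge1$, $$\deg H_i^{D^a}(V)\le \mathrm{dwidth}(V)-1+i-a.$$
   Context: Fix a commutative ring $k$ and a group $G$. $\mathrm{FI}_G$ is the category with objects $[n]$ ($n\ge0$) and morphisms $[n]\to[m]$ the pairs $(f,g)$ with $f$ injective and $g:[n]\to G$ a map of sets; composition $(f,g)\circ(f',g')=(f\circ f',h)$, $h(x)=g'(x)\,g(f'(x))$. $G_n=\mathfrak S_n\wr G$. An $\mathrm{FI}_G$-module is a functor $V:\mathrm{FI}_G\to\mathrm{Mod}_k$, $V_n=V([n])$. $M(n)_m=k[\mathrm{Hom}_{\mathrm{FI}_G}([n],[m])]$; for a $k[G_n]$-module $W$, $M(W)_m=W\otimes_{k[G_n]}k[\mathrm{Hom}_{\mathrm{FI}_G}([n],[m])]$; direct sums of these are relatively projective. $\deg V=\sup\{n:V_n\ne0\}$ ($\sup\emptyset=-\infty$). Generated in degree $\le m$: surjection $\bigoplus M(n_i)\to V$, $n_i\le m$; related in degree $\le r$: exact $0\to K\to M\to V\to0$, $M$ relatively projective, $K$ generated in degree $\le r$; presented in finite degree: both finite. $\Sigma$ sends $[n]\mapsto[n+1]$ and $(f,g)\mapsto(f_+,g_+)$ ($f_+$ extends $f$ by $n+1\mapsto m+1$, $g_+$ extends $g$ by $n+1\mapsto1_G$); $SV=V\circ\Sigma$; $\iota:V\to SV$ is $V(f^n,\mathbf1)$ in degree $n$. $DV=\mathrm{coker}(\iota)$, $D^a$ its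 $a$-th iterate, $H_i^{D^a}$ left derived functors of $D^a$. $\mathrm{dwidth}(V)=\sup_{a\ge1}(\deg H_1^{D^a}(V)+a)\in\mathbb Z\cup\{\pm\infty\}$ (with $-\infty+c=-\infty$). *)

theory Defs
  imports Main "HOL-Library.Extended_Real"
begin

text \<open>The group G is written additively (type class group_add, not necessarily
abelian); 0 is the unit 1_G and the product g h is written g + h.
The ring k is a type of class comm_ring_1.  [n] = {1..n}.\<close>

type_synonym 'g fimor = "(nat \<Rightarrow> nat) \<times> (nat \<Rightarrow> 'g)"

text \<open>Morphisms [n] -> [m] of FI_G, normalised to be 0 outside [n].\<close>
definition fi_hom :: "nat \<Rightarrow> nat \<Rightarrow> ('g::group_add) fimor set" where
  "fi_hom n m = {(f, g). f ` {1..n} \<subseteq> {1..m} \<and> inj_on f {1..n}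
                    \<and> (\<forall>x. x \<notin> {1..n} \<longrightarrow> f x = 0 \<and> g x = 0)}"

definition fi_comp :: "('g::group_add) fimor \<Rightarrow> 'g fimor \<Rightarrow> 'g fimor" where
  "fi_comp \<psi> \<phi> = (fst \<psi> \<circ> fst \<phi>, \<lambda>x. snd \<phi> x + snd \<psi> (fst \<phi> x))"

text \<open>The identity of [n]; regarded in fi_hom n (Suc n) it is (f^n, 1).\<close>
definition fi_id :: "nat \<Rightarrow> ('g::group_add) fimor" where
  "fi_id n = (\<lambda>x. if x \<in> {1..n} then x else 0, \<lambda>_. 0)"

text \<open>An FI_G-module is represented by subquotients of an ambient k-module 'v:
  V_n = car n / rel n, and act n m phi induces V(phi) : V_n -> V_m.\<close>
record ('g, 'v) fimod =
  car :: "nat \<Rightarrow> 'v set"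
  rel :: "nat \<Rightarrow> 'v set"
  act :: "nat \<Rightarrow> nat \<Rightarrow> 'g fimor \<Rightarrow> 'v \<Rightarrow> 'v"

definition msum :: "'v::ab_group_add set \<Rightarrow> 'v set \<Rightarrow> 'v set" where
  "msum X Y = {x + y | x y. x \<in> X \<and> y \<in> Y}"

definition lin_on :: "('k::comm_ring_1 \<Rightarrow> 'v::ab_group_add \<Rightarrow> 'v) \<Rightarrow> ('k \<Rightarrow> 'w::ab_group_add \<Rightarrow> 'w)
                       \<Rightarrow> 'v set \<Rightarrow> ('v \<Rightarrow> 'w) \<Rightarrow> bool" where
  "lin_on sV sW S h \<longleftrightarrow> (\<forall>x\<in>S. \<forall>y\<in>S. h (x + y) = h x + h y) \<and> (\<forall>c. \<forall>x\<in>S. h (sV c x) = sW c (h x))"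

definition is_fimod :: "('k::comm_ring_1 \<Rightarrow> 'v::ab_group_add \<Rightarrow> 'v) \<Rightarrow> ('g::group_add, 'v) fimod \<Rightarrow> bool" where
  "is_fimod s V \<longleftrightarrow> module s \<and>
     (\<forall>n. module.subspace s (car V n) \<and> module.subspace s (rel V n) \<and> rel V n \<subseteq> car V n) \<and>
     (\<forall>n m. \<forall>\<phi>\<in>fi_hom n m. lin_on s s (car V n) (act V n m \<phi>) \<and>
        act V n m \<phi> ` car V n \<subseteq> car V m \<and> act V n m \<phi> ` rel V n \<subseteq> rel V m) \<and>
     (\<forall>n. \<forall>x\<in>car V n. act V n n (fi_id n) x - x \<in> rel V n) \<and>
     (\<forall>n m l. \<forall>\<phi>\<in>fi_hom n m. \<forall>\<psi>\<in>fi_hom m l. \<forall>x\<in>car V n.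
        act V n l (fi_comp \<psi> \<phi>) x - act V m l \<psi> (act V n m \<phi> x) \<in> rel V l)"

definition fi_morph :: "('k::comm_ring_1 \<Rightarrow> 'v::ab_group_add \<Rightarrow> 'v) \<Rightarrow> ('g::group_add, 'v) fimod
      \<Rightarrow> ('k \<Rightarrow> 'w::ab_group_add \<Rightarrow> 'w) \<Rightarrow> ('g, 'w) fimod \<Rightarrow> (nat \<Rightarrow> 'v \<Rightarrow> 'w) \<Rightarrow> bool" where
  "fi_morph sV V sW W \<phi> \<longleftrightarrow>
     (\<forall>n. lin_on sV sW (car V n) (\<phi> n) \<and> \<phi> n ` car V n \<subseteq> car W n \<and> \<phi> n ` rel V n \<subseteq> rel W n) \<and>
     (\<forall>n m. \<forall>\<psi>\<in>fi_hom n m. \<forall>x\<in>car V n. \<phi> m (act V n m \<psi> x) - act W n m \<psi> (\<phi> n x) \<in> rel W m)"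

text \<open>deg V = sup {n. V_n \<noteq> 0}, in ereal (Sup {} = -\<infinity>).\<close>
definition fdeg :: "('g, 'v) fimod \<Rightarrow> ereal" where
  "fdeg V = Sup {ereal (real n) | n. \<not> car V n \<subseteq> rel V n}"

definition shift :: "('g::group_add, 'v) fimod \<Rightarrow> ('g, 'v) fimod" where
  "shift V = \<lparr> car = \<lambda>n. car V (Suc n), rel = \<lambda>n. rel V (Suc n),
     act = \<lambda>n m \<phi>. act V (Suc n) (Suc m) ((fst \<phi>)(Suc n := Suc m), (snd \<phi>)(Suc n := 0)) \<rparr>"

definition iota :: "('g::group_add, 'v) fimod \<Rightarrow> nat \<Rightarrow> 'v \<Rightarrow> 'v" where
  "iota V n = act V n (Suc n) (fi_id n)"

definition coker :: "('g, 'v::ab_group_add) fimod \<Rightarrow> ('g, 'v) fimod \<Rightarrow> (nat \<Rightarrow> 'v \<Rightarrow> 'v) \<Rightarrow> ('g, 'v) fimod" where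
  "coker V W \<phi> = \<lparr> car = car W, rel = \<lambda>n. msum (rel W n) (\<phi> n ` car V n), act = act W \<rparr>"

definition fiD :: "('g::group_add, 'v::ab_group_add) fimod \<Rightarrow> ('g, 'v) fimod" where
  "fiD V = coker V (shift V) (iota V)"

definition fiDpow :: "nat \<Rightarrow> ('g::group_add, 'v::ab_group_add) fimod \<Rightarrow> ('g, 'v) fimod" where
  "fiDpow a = fiD ^^ a"

text \<open>D^a on morphisms: the induced map on iterated cokernels.\<close>
definition fiDpow_map :: "nat \<Rightarrow> (nat \<Rightarrow> 'v \<Rightarrow> 'w) \<Rightarrow> nat \<Rightarrow> 'v \<Rightarrow> 'w" where
  "fiDpow_map a \<phi> = (\<lambda>n. \<phi> (n + a))"

definition homology :: "('g, 'v::ab_group_add) fimod \<Rightarrow> (nat \<Rightarrow> 'v \<Rightarrow> 'v) \<Rightarrow> ('g, 'v) fimod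
      \<Rightarrow> (nat \<Rightarrow> 'v \<Rightarrow> 'v) \<Rightarrow> ('g, 'v) fimod \<Rightarrow> ('g, 'v) fimod" where
  "homology X \<alpha> Y \<beta> Z = \<lparr> car = \<lambda>n. {y \<in> car Y n. \<beta> n y \<in> rel Z n},
      rel = \<lambda>n. msum (rel Y n) (\<alpha> n ` car X n), act = act Y \<rparr>"

definition exact_at :: "('g, 'u) fimod \<Rightarrow> (nat \<Rightarrow> 'u \<Rightarrow> 'v::ab_group_add) \<Rightarrow> ('g, 'v) fimod
      \<Rightarrow> (nat \<Rightarrow> 'v \<Rightarrow> 'w) \<Rightarrow> ('g, 'w) fimod \<Rightarrow> bool" where
  "exact_at X \<alpha> Y \<beta> Z \<longleftrightarrow>
     (\<forall>n. \<forall>x\<in>car X n. \<beta> n (\<alpha> n x) \<in> rel Z n) \<and>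
     (\<forall>n. {y \<in> car Y n. \<beta> n y \<in> rel Z n} \<subseteq> msum (\<alpha> n ` car X n) (rel Y n))"

definition fi_surj :: "('g, 'u) fimod \<Rightarrow> (nat \<Rightarrow> 'u \<Rightarrow> 'v::ab_group_add) \<Rightarrow> ('g, 'v) fimod \<Rightarrow> bool" where
  "fi_surj X \<alpha> Y \<longleftrightarrow> (\<forall>n. car Y n \<subseteq> msum (\<alpha> n ` car X n) (rel Y n))"

text \<open>P is free, i.e. isomorphic to a direct sum of M(n_j): there are elements
  x_j in P_{n_j} such that, for every m, the elements P(\<phi>) x_j with
  \<phi> in Hom([n_j],[m]) form a k-basis of P_m.\<close>
definition is_free :: "('k::comm_ring_1 \<Rightarrow> 'v::ab_group_add \<Rightarrow> 'v) \<Rightarrow> ('g::group_add, 'v) fimod \<Rightarrow> bool" where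
  "is_free s P \<longleftrightarrow> (\<exists>B. B \<subseteq> {(n, x). x \<in> car P n} \<and> (\<forall>m.
     car P m \<subseteq> msum (module.span s {act P n m \<phi> x | n x \<phi>. (n, x) \<in> B \<and> \<phi> \<in> fi_hom n m}) (rel P m) \<and>
     (\<forall>T (c :: (nat \<times> 'v) \<times> 'g fimor \<Rightarrow> 'k).
        finite T \<and> T \<subseteq> {(b, \<phi>). b \<in> B \<and> \<phi> \<in> fi_hom (fst b) m} \<and>
        (\<Sum>t\<in>T. s (c t) (act P (fst (fst t)) m (snd t) (snd (fst t)))) \<in> rel P m
        \<longrightarrow> (\<forall>t\<in>T. c t = 0))))"

text \<open>M is relatively projective, i.e. isomorphic to a direct sum of M(W_i),
  W_i a k[G_{n_i}]-module: W_i is realised (mod rel) inside M_{n_i}, and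
  M_m is the direct sum, over i and over order-preserving injections
  f : [n_i] -> [m], of the injective images M(f,1)(W_i)
  (since M(W)_m = W \<otimes>_{k[G_n]} k[Hom([n],[m])] = \<oplus>_f W).\<close>
definition relproj :: "('k::comm_ring_1 \<Rightarrow> 'v::ab_group_add \<Rightarrow> 'v) \<Rightarrow> ('g::group_add, 'v) fimod \<Rightarrow> bool" where
  "relproj s M \<longleftrightarrow> (\<exists>I :: (nat \<times> 'v set) set.
     (\<forall>(n, W)\<in>I. module.subspace s W \<and> rel M n \<subseteq> W \<and> W \<subseteq> car M n \<and>
         (\<forall>\<phi>\<in>fi_hom n n. act M n n \<phi> ` W \<subseteq> W)) \<and>
     (\<forall>m. let idx = {(n, W, f). (n, W) \<in> I \<and> (f, \<lambda>_. 0 :: 'g) \<in> fi_hom n m \<and> strict_mono_on {1..n} f};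
             U = (\<lambda>(n, W, f). act M n m (f, \<lambda>_. 0) ` W) in
        car M m \<subseteq> msum (module.span s (\<Union> (U ` idx))) (rel M m) \<and>
        (\<forall>T u. finite T \<and> T \<subseteq> idx \<and> (\<forall>t\<in>T. u t \<in> U t) \<and> sum u T \<in> rel M m
            \<longrightarrow> (\<forall>t\<in>T. u t \<in> rel M m)) \<and>
        (\<forall>(n, W, f)\<in>idx. \<forall>w\<in>W. act M n m (f, \<lambda>_. 0) w \<in> rel M m \<longrightarrow> w \<in> rel M n)))"

text \<open>Generated in degree \<le> r: a surjection \<oplus> M(n_i) -> V with n_i \<le> r; by
  Yoneda such a map is a family x_i \<in> V_{n_i}, and surjectivity means that the
  V(\<phi>) x_i span.\<close>
definition gen_le :: "('k::comm_ring_1 \<Rightarrow> 'v::ab_group_add \<Rightarrow> 'v) \<Rightarrow> ('g::group_add, 'v) fimod \<Rightarrow> nat \<Rightarrow> bool" where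
  "gen_le s V r \<longleftrightarrow> (\<exists>X. X \<subseteq> {(n, x). n \<le> r \<and> x \<in> car V n} \<and> (\<forall>m.
     car V m \<subseteq> msum (module.span s {act V n m \<phi> x | n x \<phi>. (n, x) \<in> X \<and> \<phi> \<in> fi_hom n m}) (rel V m)))"

definition gen_fin :: "('k::comm_ring_1 \<Rightarrow> 'v::ab_group_add \<Rightarrow> 'v) \<Rightarrow> ('g::group_add, 'v) fimod \<Rightarrow> bool" where
  "gen_fin s V \<longleftrightarrow> (\<exists>r. gen_le s V r)"

definition fi_kernel :: "('g, 'u) fimod \<Rightarrow> ('g, 'v) fimod \<Rightarrow> (nat \<Rightarrow> 'u \<Rightarrow> 'v) \<Rightarrow> ('g, 'u) fimod" where
  "fi_kernel M V \<pi> = \<lparr> car = \<lambda>n. {x \<in> car M n. \<pi> n x \<in> rel V n}, rel = rel M, act = act M \<rparr>"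

text \<open>Presented in finite degree, witnessed by 0 -> ker \<pi> -> M --\<pi>--> V -> 0.\<close>
definition presented_fin_by :: "('k::comm_ring_1 \<Rightarrow> 'm::ab_group_add \<Rightarrow> 'm) \<Rightarrow> ('g::group_add, 'm) fimod
      \<Rightarrow> (nat \<Rightarrow> 'm \<Rightarrow> 'v::ab_group_add) \<Rightarrow> ('k \<Rightarrow> 'v \<Rightarrow> 'v) \<Rightarrow> ('g, 'v) fimod \<Rightarrow> bool" where
  "presented_fin_by sM M \<pi> sV V \<longleftrightarrow> is_fimod sV V \<and> gen_fin sV V \<and>
     is_fimod sM M \<and> relproj sM M \<and> fi_morph sM M sV V \<pi> \<and> fi_surj M \<pi> V \<and>
     gen_fin sM (fi_kernel M V \<pi>)"

definition free_resolution :: "('k::comm_ring_1 \<Rightarrow> 'v::ab_group_add \<Rightarrow> 'v) \<Rightarrow> ('g::group_add, 'v) fimod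
      \<Rightarrow> ('k \<Rightarrow> 'p::ab_group_add \<Rightarrow> 'p) \<Rightarrow> (nat \<Rightarrow> ('g, 'p) fimod) \<Rightarrow> (nat \<Rightarrow> nat \<Rightarrow> 'p \<Rightarrow> 'p)
      \<Rightarrow> (nat \<Rightarrow> 'p \<Rightarrow> 'v) \<Rightarrow> bool" where
  "free_resolution sV V sP P d eps \<longleftrightarrow>
     (\<forall>i. is_fimod sP (P i) \<and> is_free sP (P i)) \<and>
     fi_morph sP (P 0) sV V eps \<and> (\<forall>i. fi_morph sP (P (Suc i)) sP (P i) (d (Suc i))) \<and>
     fi_surj (P 0) eps V \<and> exact_at (P 1) (d 1) (P 0) eps V \<and>
     (\<forall>i. exact_at (P (Suc (Suc i))) (d (Suc (Suc i))) (P (Suc i)) (d (Suc i)) (P i))"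

text \<open>deg H_i^{D^a}(V), i \<ge> 1, computed from the resolution (P, d):
  homology at D^a P_i of D^a P_{i+1} -> D^a P_i -> D^a P_{i-1}.\<close>
definition derived_deg :: "(nat \<Rightarrow> ('g::group_add, 'p::ab_group_add) fimod) \<Rightarrow> (nat \<Rightarrow> nat \<Rightarrow> 'p \<Rightarrow> 'p)
      \<Rightarrow> nat \<Rightarrow> nat \<Rightarrow> ereal" where
  "derived_deg P d a i = fdeg (homology
      (fiDpow a (P (Suc i))) (fiDpow_map a (d (Suc i)))
      (fiDpow a (P i)) (fiDpow_map a (d i)) (fiDpow a (P (i - 1))))"

definition dwidth :: "(nat \<Rightarrow> ('g::group_add, 'p::ab_group_add) fimod) \<Rightarrow> (nat \<Rightarrow> nat \<Rightarrow> 'p \<Rightarrow> 'p) \<Rightarrow> ereal" where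
  "dwidth P d = (SUP a\<in>{1..}. derived_deg P d a 1 + ereal (real a))"

end

theory Submission
  imports Defs
begin


definition ext1 :: "nat \<Rightarrow> nat \<Rightarrow> ('g::group_add) fimor \<Rightarrow> 'g fimor" where
  "ext1 n m \<phi> = ((fst \<phi>)(Suc n := Suc m), (snd \<phi>)(Suc n := 0))"

lemma shift_simps[simp]: "car (shift V) n = car V (Suc n)" "rel (shift V) n = rel V (Suc n)"
  "act (shift V) n m \<phi> = act V (Suc n) (Suc m) (ext1 n m \<phi>)"
  by (simp_all add: shift_def ext1_def)

lemma fiD_simps[simp]: "car (fiD V) n = car V (Suc n)"
  "rel (fiD V) n = msum (rel V (Suc n)) (iota V n ` car V n)"
  "act (fiD V) n m \<phi> = act V (Suc n) (Suc m) (ext1 n m \<phi>)"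
  by (simp_all add: fiD_def coker_def)

lemma fi_hom_iff: "\<phi> \<in> fi_hom n m \<longleftrightarrow> fst \<phi> ` {1..n} \<subseteq> {1..m} \<and> inj_on (fst \<phi>) {1..n}
                    \<and> (\<forall>x. x \<notin> {1..n} \<longrightarrow> fst \<phi> x = 0 \<and> snd \<phi> x = 0)"
  by (cases \<phi>) (simp add: fi_hom_def)

lemma ext1_hom: "\<phi> \<in> fi_hom n m \<Longrightarrow> ext1 n m \<phi> \<in> fi_hom (Suc n) (Suc m)"
proof -
  assume h: "\<phi> \<in> fi_hom n m"
  have a: "fst \<phi> x \<in> {1..m}" if "x \<in> {1..n}" for x using h that unfolding fi_hom_iff by blast
  have b: "inj_on (fst \<phi>) {1..n}" using h unfolding fi_hom_iff by blast
  have c: "fst \<phi> x = 0 \<and> snd \<phi> x = 0" if "x \<notin> {1..n}" for x using h that unfolding fi_hom_iff by blast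
  show ?thesis unfolding fi_hom_iff ext1_def
  proof (intro conjI allI impI)
    show "fst ((fst \<phi>)(Suc n := Suc m), (snd \<phi>)(Suc n := 0)) ` {1..Suc n} \<subseteq> {1..Suc m}"
    proof
      fix y assume "y \<in> fst ((fst \<phi>)(Suc n := Suc m), (snd \<phi>)(Suc n := 0)) ` {1..Suc n}"
      then obtain x where x: "x \<in> {1..Suc n}" and y: "y = ((fst \<phi>)(Suc n := Suc m)) x" unfolding fst_conv by blast
      show "y \<in> {1..Suc m}"
      proof (cases "x = Suc n")
        case True then show ?thesis using y by simp
      next
        case False then have "x \<in> {1..n}" using x by auto
        then have "fst \<phi> x \<in> {1..m}" by (rule a)
        then show ?thesis using y False by auto
      qed
    qed
  next
    show "inj_on (fst ((fst \<phi>)(Suc n := Suc m), (snd \<phi>)(Suc n := 0))) {1..Suc n}"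
    proof (rule inj_onI)
      fix x y assume x: "x \<in> {1..Suc n}" and y: "y \<in> {1..Suc n}"
        and e: "fst ((fst \<phi>)(Suc n := Suc m), (snd \<phi>)(Suc n := 0)) x = fst ((fst \<phi>)(Suc n := Suc m), (snd \<phi>)(Suc n := 0)) y"
      show "x = y"
      proof (cases "x = Suc n"; cases "y = Suc n")
        assume "x \<noteq> Suc n" "y \<noteq> Suc n"
        then have "x \<in> {1..n}" "y \<in> {1..n}" using x y by auto
        moreover have "fst \<phi> x = fst \<phi> y" using e \<open>x \<noteq> Suc n\<close> \<open>y \<noteq> Suc n\<close> by simp
        ultimately show ?thesis using b unfolding inj_on_def by blast
      next
        assume "x = Suc n" "y \<noteq> Suc n"
        then have "y \<in> {1..n}" using y by auto
        then show ?thesis using e a[of y] \<open>x = Suc n\<close> \<open>y \<noteq> Suc n\<close> by auto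
      next
        assume "x \<noteq> Suc n" "y = Suc n"
        then have "x \<in> {1..n}" using x by auto
        then show ?thesis using e a[of x] \<open>y = Suc n\<close> \<open>x \<noteq> Suc n\<close> by auto
      qed simp
    qed
  next
    fix x assume "x \<notin> {1..Suc n}"
    then show "fst ((fst \<phi>)(Suc n := Suc m), (snd \<phi>)(Suc n := 0)) x = 0"
      "snd ((fst \<phi>)(Suc n := Suc m), (snd \<phi>)(Suc n := 0)) x = 0" using c[of x] by auto
  qed
qed

lemma fi_id_hom: "fi_id n \<in> fi_hom n (Suc n)"
  unfolding fi_hom_iff fi_id_def by (auto simp: inj_on_def)

lemma fi_id_hom': "fi_id n \<in> fi_hom n n"
  unfolding fi_hom_iff fi_id_def by (auto simp: inj_on_def)

lemma fi_comp_hom: "\<phi> \<in> fi_hom n m \<Longrightarrow> \<psi> \<in> fi_hom m l \<Longrightarrow> fi_comp \<psi> \<phi> \<in> fi_hom n l"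
proof -
  assume h: "\<phi> \<in> fi_hom n m" and g: "\<psi> \<in> fi_hom m l"
  have a: "fst \<phi> x \<in> {1..m}" if "x \<in> {1..n}" for x using h that unfolding fi_hom_iff by blast
  have b: "inj_on (fst \<phi>) {1..n}" using h unfolding fi_hom_iff by blast
  have c: "fst \<phi> x = 0 \<and> snd \<phi> x = 0" if "x \<notin> {1..n}" for x using h that unfolding fi_hom_iff by blast
  have a': "fst \<psi> x \<in> {1..l}" if "x \<in> {1..m}" for x using g that unfolding fi_hom_iff by blast
  have b': "inj_on (fst \<psi>) {1..m}" using g unfolding fi_hom_iff by blast
  have c': "fst \<psi> x = 0 \<and> snd \<psi> x = 0" if "x \<notin> {1..m}" for x using g that unfolding fi_hom_iff by blast
  have z: "0 \<notin> {1..m::nat}" by simp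
  show ?thesis unfolding fi_hom_iff fi_comp_def
  proof (intro conjI allI impI)
    show "fst (fst \<psi> \<circ> fst \<phi>, \<lambda>x. snd \<phi> x + snd \<psi> (fst \<phi> x)) ` {1..n} \<subseteq> {1..l}"
      using a a' by auto
  next
    show "inj_on (fst (fst \<psi> \<circ> fst \<phi>, \<lambda>x. snd \<phi> x + snd \<psi> (fst \<phi> x))) {1..n}"
      unfolding fst_conv
    proof (rule comp_inj_on)
      show "inj_on (fst \<phi>) {1..n}" by (rule b)
      have "fst \<phi> ` {1..n} \<subseteq> {1..m}" using a by auto
      then show "inj_on (fst \<psi>) (fst \<phi> ` {1..n})" using b' inj_on_subset by blast
    qed
  next
    fix x assume "x \<notin> {1..n}"
    then show "fst (fst \<psi> \<circ> fst \<phi>, \<lambda>x. snd \<phi> x + snd \<psi> (fst \<phi> x)) x = 0"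
      "snd (fst \<psi> \<circ> fst \<phi>, \<lambda>x. snd \<phi> x + snd \<psi> (fst \<phi> x)) x = 0"
      using c[of x] c'[OF z] by auto
  qed
qed

lemma hom_out: "\<phi> \<in> fi_hom n m \<Longrightarrow> x \<notin> {1..n} \<Longrightarrow> fst \<phi> x = 0 \<and> snd \<phi> x = 0"
  unfolding fi_hom_iff by blast

lemma hom_in: "\<phi> \<in> fi_hom n m \<Longrightarrow> x \<in> {1..n} \<Longrightarrow> fst \<phi> x \<in> {1..m}"
  unfolding fi_hom_iff by blast

lemma ext1_id: "fi_comp (ext1 n m \<phi>) (fi_id n) = fi_comp (fi_id m) \<phi>" if h: "\<phi> \<in> fi_hom n m"
proof (rule prod_eqI)
  have z: "fst \<phi> 0 = 0" "snd \<phi> 0 = 0" using hom_out[OF h, of 0] by auto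
  show "fst (fi_comp (ext1 n m \<phi>) (fi_id n)) = fst (fi_comp (fi_id m) \<phi>)"
  proof
    fix x show "fst (fi_comp (ext1 n m \<phi>) (fi_id n)) x = fst (fi_comp (fi_id m) \<phi>) x"
    proof (cases "x \<in> {1..n}")
      case True then show ?thesis using hom_in[OF h True] by (simp add: fi_comp_def ext1_def fi_id_def)
    next
      case False then show ?thesis using hom_out[OF h False] z by (simp add: fi_comp_def ext1_def fi_id_def)
    qed
  qed
  show "snd (fi_comp (ext1 n m \<phi>) (fi_id n)) = snd (fi_comp (fi_id m) \<phi>)"
  proof
    fix x show "snd (fi_comp (ext1 n m \<phi>) (fi_id n)) x = snd (fi_comp (fi_id m) \<phi>) x"
    proof (cases "x \<in> {1..n}")
      case True then show ?thesis using hom_in[OF h True] by (simp add: fi_comp_def ext1_def fi_id_def)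
    next
      case False then show ?thesis using hom_out[OF h False] z by (simp add: fi_comp_def ext1_def fi_id_def)
    qed
  qed
qed

lemma ext1_comp: "fi_comp (ext1 m l \<psi>) (ext1 n m \<phi>) = ext1 n l (fi_comp \<psi> \<phi>)"
  if h: "\<phi> \<in> fi_hom n m" and g: "\<psi> \<in> fi_hom m l"
proof (rule prod_eqI)
  have z: "fst \<psi> 0 = 0" "snd \<psi> 0 = 0" using hom_out[OF g, of 0] by auto
  show "fst (fi_comp (ext1 m l \<psi>) (ext1 n m \<phi>)) = fst (ext1 n l (fi_comp \<psi> \<phi>))"
  proof
    fix x show "fst (fi_comp (ext1 m l \<psi>) (ext1 n m \<phi>)) x = fst (ext1 n l (fi_comp \<psi> \<phi>)) x"
    proof (cases "x \<in> {1..n}")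
      case True then show ?thesis using hom_in[OF h True] by (auto simp add: fi_comp_def ext1_def)
    next
      case False then show ?thesis using hom_out[OF h False] z by (simp add: fi_comp_def ext1_def)
    qed
  qed
  show "snd (fi_comp (ext1 m l \<psi>) (ext1 n m \<phi>)) = snd (ext1 n l (fi_comp \<psi> \<phi>))"
  proof
    fix x show "snd (fi_comp (ext1 m l \<psi>) (ext1 n m \<phi>)) x = snd (ext1 n l (fi_comp \<psi> \<phi>)) x"
    proof (cases "x \<in> {1..n}")
      case True then show ?thesis using hom_in[OF h True] by (auto simp add: fi_comp_def ext1_def)
    next
      case False then show ?thesis using hom_out[OF h False] z by (simp add: fi_comp_def ext1_def)
    qed
  qed
qed

lemma ext1_fi_id: "ext1 n n (fi_id n) = fi_id (Suc n)"
  unfolding ext1_def fi_id_def by (auto simp: fun_eq_iff)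



lemma msumI: "x \<in> X \<Longrightarrow> y \<in> Y \<Longrightarrow> x + y \<in> msum X Y"
  unfolding msum_def by blast

lemma msumE: "z \<in> msum X Y \<Longrightarrow> (\<And>x y. x \<in> X \<Longrightarrow> y \<in> Y \<Longrightarrow> z = x + y \<Longrightarrow> P) \<Longrightarrow> P"
  unfolding msum_def by blast

lemma msum_commute: "msum X Y = msum Y X"
  unfolding msum_def by (auto, metis add.commute, metis add.commute)

lemma lin_on_add: "lin_on sV sW S h \<Longrightarrow> x \<in> S \<Longrightarrow> y \<in> S \<Longrightarrow> h (x + y) = h x + h y"
  unfolding lin_on_def by blast

lemma lin_on_scale: "lin_on sV sW S h \<Longrightarrow> x \<in> S \<Longrightarrow> h (sV c x) = sW c (h x)"
  unfolding lin_on_def by blast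

lemma lin_on_zero: "lin_on sV sW S h \<Longrightarrow> 0 \<in> S \<Longrightarrow> h 0 = 0"
  using lin_on_add[of sV sW S h 0 0] by simp

lemma lin_on_diff:
  assumes "lin_on sV sW S h" "x \<in> S" "y \<in> S" "x - y \<in> S"
  shows "h (x - y) = h x - h y"
  using lin_on_add[OF assms(1) assms(4) assms(3)] by (simp add: algebra_simps)

lemma msum_subspace:
  assumes m: "module s" and X: "module.subspace s X" and Y: "module.subspace s Y"
  shows "module.subspace s (msum X Y)"
proof -
  interpret module s by fact
  show ?thesis unfolding subspace_def msum_def
  proof safe
    show "\<exists>x y. 0 = x + y \<and> x \<in> X \<and> y \<in> Y"
      using subspace_0[OF X] subspace_0[OF Y] by force
  next
    fix x y x' y' assume "x \<in> X" "y \<in> Y" "x' \<in> X" "y' \<in> Y"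
    then show "\<exists>a b. x + y + (x' + y') = a + b \<and> a \<in> X \<and> b \<in> Y"
      by (intro exI[of _ "x + x'"] exI[of _ "y+y'"]) (auto simp: algebra_simps intro: subspace_add[OF X] subspace_add[OF Y])
  next
    fix c x y assume "x \<in> X" "y \<in> Y"
    then show "\<exists>a b. s c (x + y) = a + b \<and> a \<in> X \<and> b \<in> Y"
      by (intro exI[of _ "s c x"] exI[of _ "s c y"]) (auto simp: scale_right_distrib intro: subspace_scale[OF X] subspace_scale[OF Y])
  qed
qed

lemma image_subspace:
  assumes m: "module s" and h: "lin_on s s S h" and S: "module.subspace s S"
  shows "module.subspace s (h ` S)"
proof -
  interpret module s by fact
  show ?thesis unfolding subspace_def
  proof safe
    show "0 \<in> h ` S" using lin_on_zero[OF h subspace_0[OF S]] subspace_0[OF S] by (metis image_eqI)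
  next
    fix x y assume "x \<in> S" "y \<in> S"
    then show "h x + h y \<in> h ` S" using lin_on_add[OF h] subspace_add[OF S] by (metis image_eqI)
  next
    fix c x assume "x \<in> S"
    then show "s c (h x) \<in> h ` S" using lin_on_scale[OF h] subspace_scale[OF S] by (metis image_eqI)
  qed
qed

lemma subset_msum1: "module s \<Longrightarrow> module.subspace s Y \<Longrightarrow> X \<subseteq> msum X Y"
proof
  fix x assume "module s" "module.subspace s Y" "x \<in> X"
  then have "x + 0 \<in> msum X Y" using module.subspace_0 msumI by metis
  then show "x \<in> msum X Y" by simp
qed

lemma subset_msum2: "module s \<Longrightarrow> module.subspace s X \<Longrightarrow> Y \<subseteq> msum X Y"
proof
  fix x assume "module s" "module.subspace s X" "x \<in> Y"
  then have "0 + x \<in> msum X Y" using module.subspace_0 msumI by metis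
  then show "x \<in> msum X Y" by simp
qed

lemma msum_sub: "module s \<Longrightarrow> module.subspace s Z \<Longrightarrow> X \<subseteq> Z \<Longrightarrow> Y \<subseteq> Z \<Longrightarrow> msum X Y \<subseteq> Z"
  unfolding msum_def using module.subspace_add[of s Z] by blast

lemma rel_trans: "module s \<Longrightarrow> module.subspace s R \<Longrightarrow> a - b \<in> R \<Longrightarrow> b - c \<in> R \<Longrightarrow> a - c \<in> R"
  using module.subspace_add[of s R "a - b" "b - c"] by simp

lemma fimod_module: "is_fimod s V \<Longrightarrow> module s" unfolding is_fimod_def by blast
lemma fimod_car: "is_fimod s V \<Longrightarrow> module.subspace s (car V n)" unfolding is_fimod_def by blast
lemma fimod_rel: "is_fimod s V \<Longrightarrow> module.subspace s (rel V n)" unfolding is_fimod_def by blast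
lemma fimod_rel_car: "is_fimod s V \<Longrightarrow> rel V n \<subseteq> car V n" unfolding is_fimod_def by blast
lemma fimod_lin: "is_fimod s V \<Longrightarrow> \<phi> \<in> fi_hom n m \<Longrightarrow> lin_on s s (car V n) (act V n m \<phi>)"
  unfolding is_fimod_def by blast
lemma fimod_act_car: "is_fimod s V \<Longrightarrow> \<phi> \<in> fi_hom n m \<Longrightarrow> x \<in> car V n \<Longrightarrow> act V n m \<phi> x \<in> car V m"
  unfolding is_fimod_def by blast
lemma fimod_act_rel: "is_fimod s V \<Longrightarrow> \<phi> \<in> fi_hom n m \<Longrightarrow> x \<in> rel V n \<Longrightarrow> act V n m \<phi> x \<in> rel V m"
  unfolding is_fimod_def by blast
lemma fimod_id: "is_fimod s V \<Longrightarrow> x \<in> car V n \<Longrightarrow> act V n n (fi_id n) x - x \<in> rel V n"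
  unfolding is_fimod_def by blast
lemma fimod_comp: "is_fimod s V \<Longrightarrow> \<phi> \<in> fi_hom n m \<Longrightarrow> \<psi> \<in> fi_hom m l \<Longrightarrow> x \<in> car V n \<Longrightarrow>
   act V n l (fi_comp \<psi> \<phi>) x - act V m l \<psi> (act V n m \<phi> x) \<in> rel V l"
  unfolding is_fimod_def by blast

lemma fimod_iota_lin: "is_fimod s V \<Longrightarrow> lin_on s s (car V n) (iota V n)"
  unfolding iota_def using fimod_lin fi_id_hom by blast



lemma is_fimod_fiD:
  fixes V :: "('g::group_add, 'v::ab_group_add) fimod"
  assumes V: "is_fimod s V"
  shows "is_fimod s (fiD V)"
proof -
  have m: "module s" using fimod_module[OF V] .
  have relsub: "module.subspace s (rel (fiD V) n)" for n
    using msum_subspace[OF m fimod_rel[OF V] image_subspace[OF m fimod_iota_lin[OF V] fimod_car[OF V]]] by simp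
  have relcar: "rel (fiD V) n \<subseteq> car (fiD V) n" for n
    apply simp
    apply (rule msum_sub[OF m fimod_car[OF V] fimod_rel_car[OF V]])
    using fimod_act_car[OF V fi_id_hom] unfolding iota_def by blast
  have actrel: "act (fiD V) n m \<phi> x \<in> rel (fiD V) m" if ph: "\<phi> \<in> fi_hom n m" and x: "x \<in> rel (fiD V) n" for n m x and \<phi> :: "'g fimor"
  proof -
    from x obtain r y where r: "r \<in> rel V (Suc n)" and y: "y \<in> car V n" and xe: "x = r + iota V n y"
      by (auto elim!: msumE)
    let ?p = "ext1 n m \<phi>"
    have p: "?p \<in> fi_hom (Suc n) (Suc m)" using ext1_hom[OF ph] .
    have rc: "r \<in> car V (Suc n)" using r fimod_rel_car[OF V] by blast
    have ic: "iota V n y \<in> car V (Suc n)" using fimod_act_car[OF V fi_id_hom y] unfolding iota_def .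
    have e1: "act V (Suc n) (Suc m) ?p x = act V (Suc n) (Suc m) ?p r + act V (Suc n) (Suc m) ?p (iota V n y)"
      using lin_on_add[OF fimod_lin[OF V p] rc ic] xe by simp
    have a1: "act V n (Suc m) (fi_comp ?p (fi_id n)) y - act V (Suc n) (Suc m) ?p (iota V n y) \<in> rel V (Suc m)"
      using fimod_comp[OF V fi_id_hom p y] unfolding iota_def .
    have a2: "act V n (Suc m) (fi_comp (fi_id m) \<phi>) y - iota V m (act V n m \<phi> y) \<in> rel V (Suc m)"
      using fimod_comp[OF V ph fi_id_hom y] unfolding iota_def .
    have a3: "act V (Suc n) (Suc m) ?p (iota V n y) - iota V m (act V n m \<phi> y) \<in> rel V (Suc m)"
    proof -
      have "- (act V n (Suc m) (fi_comp ?p (fi_id n)) y - act V (Suc n) (Suc m) ?p (iota V n y)) \<in> rel V (Suc m)"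
        using module.subspace_neg[OF m fimod_rel[OF V] a1] .
      then have "act V (Suc n) (Suc m) ?p (iota V n y) - act V n (Suc m) (fi_comp (fi_id m) \<phi>) y \<in> rel V (Suc m)"
        using ext1_id[OF ph] by simp
      then show ?thesis using rel_trans[OF m fimod_rel[OF V] _ a2] by blast
    qed
    have ar: "act V (Suc n) (Suc m) ?p r \<in> rel V (Suc m)" using fimod_act_rel[OF V p r] .
    have "act (fiD V) n m \<phi> x = (act V (Suc n) (Suc m) ?p r + (act V (Suc n) (Suc m) ?p (iota V n y) - iota V m (act V n m \<phi> y)))
        + iota V m (act V n m \<phi> y)"
      using e1 by simp
    also have "\<dots> \<in> msum (rel V (Suc m)) (iota V m ` car V m)"
      apply (rule msumI)
       apply (rule module.subspace_add[OF m fimod_rel[OF V] ar a3])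
      using fimod_act_car[OF V ph y] by blast
    finally show ?thesis by simp
  qed
  show ?thesis
    unfolding is_fimod_def
  proof (intro conjI allI ballI)
    show "module s" by fact
  next
    fix n show "module.subspace s (car (fiD V) n)" using fimod_car[OF V] by simp
  next
    fix n show "module.subspace s (rel (fiD V) n)" by (rule relsub)
  next
    fix n show "rel (fiD V) n \<subseteq> car (fiD V) n" by (rule relcar)
  next
    fix n m and \<phi> :: "'g fimor" assume ph: "\<phi> \<in> fi_hom n m"
    show "lin_on s s (car (fiD V) n) (act (fiD V) n m \<phi>)" using fimod_lin[OF V ext1_hom[OF ph]] by simp
  next
    fix n m and \<phi> :: "'g fimor" assume ph: "\<phi> \<in> fi_hom n m"
    show "act (fiD V) n m \<phi> ` car (fiD V) n \<subseteq> car (fiD V) m" using fimod_act_car[OF V ext1_hom[OF ph]] by auto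
  next
    fix n m and \<phi> :: "'g fimor" assume ph: "\<phi> \<in> fi_hom n m"
    show "act (fiD V) n m \<phi> ` rel (fiD V) n \<subseteq> rel (fiD V) m" using actrel[OF ph] by blast
  next
    fix n x assume x: "x \<in> car (fiD V) n"
    show "act (fiD V) n n (fi_id n) x - x \<in> rel (fiD V) n"
      using fimod_id[OF V, of x "Suc n"] x subset_msum1[OF m image_subspace[OF m fimod_iota_lin[OF V] fimod_car[OF V]], of "rel V (Suc n)" n]
      by (auto simp: ext1_fi_id)
  next
    fix n m l x and \<phi> \<psi> :: "'g fimor" assume ph: "\<phi> \<in> fi_hom n m" and ps: "\<psi> \<in> fi_hom m l" and x: "x \<in> car (fiD V) n"
    have "act V (Suc n) (Suc l) (fi_comp (ext1 m l \<psi>) (ext1 n m \<phi>)) x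
        - act V (Suc m) (Suc l) (ext1 m l \<psi>) (act V (Suc n) (Suc m) (ext1 n m \<phi>) x) \<in> rel V (Suc l)"
      using fimod_comp[OF V ext1_hom[OF ph] ext1_hom[OF ps]] x by simp
    then show "act (fiD V) n l (fi_comp \<psi> \<phi>) x - act (fiD V) m l \<psi> (act (fiD V) n m \<phi> x) \<in> rel (fiD V) l"
      using ext1_comp[OF ph ps] subset_msum1[OF m image_subspace[OF m fimod_iota_lin[OF V] fimod_car[OF V]], of "rel V (Suc l)" l]
      by auto
  qed
qed



lemma morph_lin: "fi_morph sV V sW W \<phi> \<Longrightarrow> lin_on sV sW (car V n) (\<phi> n)" unfolding fi_morph_def by blast
lemma morph_car: "fi_morph sV V sW W \<phi> \<Longrightarrow> x \<in> car V n \<Longrightarrow> \<phi> n x \<in> car W n" unfolding fi_morph_def by blast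
lemma morph_rel: "fi_morph sV V sW W \<phi> \<Longrightarrow> x \<in> rel V n \<Longrightarrow> \<phi> n x \<in> rel W n" unfolding fi_morph_def by blast
lemma morph_nat: "fi_morph sV V sW W \<phi> \<Longrightarrow> \<psi> \<in> fi_hom n m \<Longrightarrow> x \<in> car V n \<Longrightarrow>
   \<phi> m (act V n m \<psi> x) - act W n m \<psi> (\<phi> n x) \<in> rel W m" unfolding fi_morph_def by blast

lemma morph_iota: "fi_morph sV V sW W \<phi> \<Longrightarrow> x \<in> car V n \<Longrightarrow>
   \<phi> (Suc n) (iota V n x) - iota W n (\<phi> n x) \<in> rel W (Suc n)"
  unfolding iota_def using morph_nat fi_id_hom by blast

lemma iota_car: "is_fimod s V \<Longrightarrow> x \<in> car V n \<Longrightarrow> iota V n x \<in> car V (Suc n)"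
  unfolding iota_def using fimod_act_car fi_id_hom by blast

lemma iota_rel: "is_fimod s V \<Longrightarrow> x \<in> rel V n \<Longrightarrow> iota V n x \<in> rel V (Suc n)"
  unfolding iota_def using fimod_act_rel fi_id_hom by blast

lemma fi_morph_fiD:
  fixes V :: "('g::group_add, 'v::ab_group_add) fimod" and W :: "('g, 'v) fimod"
  assumes d: "fi_morph s V s W d" and V: "is_fimod s V" and W: "is_fimod s W"
  shows "fi_morph s (fiD V) s (fiD W) (\<lambda>n. d (Suc n))"
  unfolding fi_morph_def
proof (intro conjI allI ballI)
  have m: "module s" using fimod_module[OF V] .
  fix n
  show "lin_on s s (car (fiD V) n) (d (Suc n))" using morph_lin[OF d] by simp
  show "d (Suc n) ` car (fiD V) n \<subseteq> car (fiD W) n" using morph_car[OF d] by auto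
  show "d (Suc n) ` rel (fiD V) n \<subseteq> rel (fiD W) n"
  proof
    fix z assume "z \<in> d (Suc n) ` rel (fiD V) n"
    then obtain x where x: "x \<in> rel (fiD V) n" and z: "z = d (Suc n) x" by blast
    from x obtain r y where r: "r \<in> rel V (Suc n)" and y: "y \<in> car V n" and xe: "x = r + iota V n y"
      by (auto elim!: msumE)
    have rc: "r \<in> car V (Suc n)" using r fimod_rel_car[OF V] by blast
    have "z = d (Suc n) r + d (Suc n) (iota V n y)"
      using z xe lin_on_add[OF morph_lin[OF d] rc iota_car[OF V y]] by simp
    also have "\<dots> = (d (Suc n) r + (d (Suc n) (iota V n y) - iota W n (d n y))) + iota W n (d n y)" by simp
    also have "\<dots> \<in> msum (rel W (Suc n)) (iota W n ` car W n)"
      apply (rule msumI)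
       apply (rule module.subspace_add[OF m fimod_rel[OF W] morph_rel[OF d r] morph_iota[OF d y]])
      using morph_car[OF d y] by blast
    finally show "z \<in> rel (fiD W) n" by simp
  qed
next
  have m: "module s" using fimod_module[OF V] .
  fix n m' and \<psi> :: "'g fimor" and x assume ps: "\<psi> \<in> fi_hom n m'" and x: "x \<in> car (fiD V) n"
  have "d (Suc m') (act V (Suc n) (Suc m') (ext1 n m' \<psi>) x) - act W (Suc n) (Suc m') (ext1 n m' \<psi>) (d (Suc n) x) \<in> rel W (Suc m')"
    using morph_nat[OF d ext1_hom[OF ps]] x by simp
  then show "d (Suc m') (act (fiD V) n m' \<psi> x) - act (fiD W) n m' \<psi> (d (Suc n) x) \<in> rel (fiD W) m'"
    using subset_msum1[OF m image_subspace[OF m fimod_iota_lin[OF W] fimod_car[OF W]], of "rel W (Suc m')" m'] by auto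
qed

lemma fiDpow_Suc: "fiDpow (Suc b) V = fiD (fiDpow b V)" by (simp add: fiDpow_def)
lemma fiDpow_0: "fiDpow 0 V = V" by (simp add: fiDpow_def)
lemma fiDpow_map_Suc: "fiDpow_map (Suc b) d = (\<lambda>n. fiDpow_map b d (Suc n))"
  by (simp add: fiDpow_map_def)
lemma fiDpow_map_0: "fiDpow_map 0 d = d" by (simp add: fiDpow_map_def)

lemma fimod_fiDpow: "is_fimod s V \<Longrightarrow> is_fimod s (fiDpow b V)"
  by (induction b) (auto simp: fiDpow_Suc fiDpow_0 intro: is_fimod_fiD)

lemma car_fiDpow: "car (fiDpow b V) n = car V (n + b)"
  by (induction b arbitrary: n) (auto simp: fiDpow_Suc fiDpow_0)

lemma rel_fiDpow: "is_fimod s V \<Longrightarrow> rel V (n + b) \<subseteq> rel (fiDpow b V) n"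
proof (induction b arbitrary: n)
  case 0 then show ?case by (simp add: fiDpow_0)
next
  case (Suc b)
  have "rel V (n + Suc b) = rel V (Suc n + b)" by simp
  also have "\<dots> \<subseteq> rel (fiDpow b V) (Suc n)" using Suc by blast
  also have "\<dots> \<subseteq> rel (fiDpow (Suc b) V) n"
    using subset_msum1[OF fimod_module[OF Suc.prems] image_subspace[OF fimod_module[OF Suc.prems]
          fimod_iota_lin[OF fimod_fiDpow[OF Suc.prems]] fimod_car[OF fimod_fiDpow[OF Suc.prems]]]]
    by (simp add: fiDpow_Suc)
  finally show ?case .
qed

lemma morph_fiDpow: "fi_morph s V s W d \<Longrightarrow> is_fimod s V \<Longrightarrow> is_fimod s W \<Longrightarrow>
   fi_morph s (fiDpow b V) s (fiDpow b W) (fiDpow_map b d)"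
proof (induction b)
  case 0 then show ?case by (simp add: fiDpow_0 fiDpow_map_0)
next
  case (Suc b)
  show ?case unfolding fiDpow_Suc fiDpow_map_Suc
    using fi_morph_fiD[OF Suc.IH[OF Suc.prems] fimod_fiDpow[OF Suc.prems(2)] fimod_fiDpow[OF Suc.prems(3)]] .
qed

lemma homology_simps[simp]: "car (homology X \<alpha> Y \<beta> Z) n = {y \<in> car Y n. \<beta> n y \<in> rel Z n}"
  "rel (homology X \<alpha> Y \<beta> Z) n = msum (rel Y n) (\<alpha> n ` car X n)"
  by (simp_all add: homology_def)

lemma step:
  fixes K0 K1 K2 K3 :: "('g::group_add, 'v::ab_group_add) fimod"
  assumes F0: "is_fimod s K0" and F1: "is_fimod s K1" and F2: "is_fimod s K2" and F3: "is_fimod s K3"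
    and d1: "fi_morph s K1 s K0 d1" and d2: "fi_morph s K2 s K1 d2" and d3: "fi_morph s K3 s K2 d3"
    and dd: "\<And>n x. x \<in> car K2 n \<Longrightarrow> d1 n (d2 n x) \<in> rel K0 n"
    and inj: "\<And>x. x \<in> car K0 n \<Longrightarrow> iota K0 n x \<in> rel K0 (Suc n) \<Longrightarrow> x \<in> rel K0 n"
    and h1: "car (homology K3 d3 K2 d2 K1) (Suc n) \<subseteq> rel (homology K3 d3 K2 d2 K1) (Suc n)"
    and h2: "car (homology K2 d2 K1 d1 K0) n \<subseteq> rel (homology K2 d2 K1 d1 K0) n"
  shows "car (homology (fiD K3) (\<lambda>n. d3 (Suc n)) (fiD K2) (\<lambda>n. d2 (Suc n)) (fiD K1)) n
       \<subseteq> rel (homology (fiD K3) (\<lambda>n. d3 (Suc n)) (fiD K2) (\<lambda>n. d2 (Suc n)) (fiD K1)) n"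
proof
  have m: "module s" using fimod_module[OF F0] .
  note sub = module.subspace_add[OF m] module.subspace_diff[OF m] module.subspace_neg[OF m]
  fix y assume "y \<in> car (homology (fiD K3) (\<lambda>n. d3 (Suc n)) (fiD K2) (\<lambda>n. d2 (Suc n)) (fiD K1)) n"
  then have y: "y \<in> car K2 (Suc n)" and dy: "d2 (Suc n) y \<in> msum (rel K1 (Suc n)) (iota K1 n ` car K1 n)"
    by auto
  from dy obtain r z where r: "r \<in> rel K1 (Suc n)" and z: "z \<in> car K1 n"
    and dye: "d2 (Suc n) y = r + iota K1 n z"
    by (auto elim!: msumE)
  have rc: "r \<in> car K1 (Suc n)" using r fimod_rel_car[OF F1] by blast
  have iz: "iota K1 n z \<in> car K1 (Suc n)" using iota_car[OF F1 z] .
  have "d1 (Suc n) (iota K1 n z) = d1 (Suc n) (d2 (Suc n) y) - d1 (Suc n) r"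
    using lin_on_add[OF morph_lin[OF d1] rc iz] dye by (simp add: algebra_simps)
  then have "d1 (Suc n) (iota K1 n z) \<in> rel K0 (Suc n)"
    using sub(2)[OF fimod_rel[OF F0] dd[OF y] morph_rel[OF d1 r]] by simp
  then have "iota K0 n (d1 n z) \<in> rel K0 (Suc n)"
    using sub(2)[OF fimod_rel[OF F0] _ morph_iota[OF d1 z]] by fastforce
  then have "d1 n z \<in> rel K0 n" using inj morph_car[OF d1 z] by blast
  then have "z \<in> car (homology K2 d2 K1 d1 K0) n" using z by simp
  then have "z \<in> msum (rel K1 n) (d2 n ` car K2 n)" using h2 by auto
  then obtain r' w where r': "r' \<in> rel K1 n" and w: "w \<in> car K2 n" and ze: "z = r' + d2 n w"
    by (auto elim!: msumE)
  have iw: "iota K2 n w \<in> car K2 (Suc n)" using iota_car[OF F2 w] .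
  define y' where "y' = y - iota K2 n w"
  have y': "y' \<in> car K2 (Suc n)" unfolding y'_def using sub(2)[OF fimod_car[OF F2] y iw] .
  have r'c: "r' \<in> car K1 n" using r' fimod_rel_car[OF F1] by blast
  have dwc: "d2 n w \<in> car K1 n" using morph_car[OF d2 w] .
  have e1: "d2 (Suc n) y' = d2 (Suc n) y - d2 (Suc n) (iota K2 n w)"
    unfolding y'_def using lin_on_diff[OF morph_lin[OF d2] y iw y'[unfolded y'_def]] .
  have e2: "iota K1 n z = iota K1 n r' + iota K1 n (d2 n w)"
    using lin_on_add[OF fimod_iota_lin[OF F1] r'c dwc] ze by simp
  have "d2 (Suc n) y' = r + iota K1 n r' - (d2 (Suc n) (iota K2 n w) - iota K1 n (d2 n w))"
    using e1 e2 dye by (simp add: algebra_simps)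
  also have "\<dots> \<in> rel K1 (Suc n)"
    using sub(2)[OF fimod_rel[OF F1] sub(1)[OF fimod_rel[OF F1] r iota_rel[OF F1 r']] morph_iota[OF d2 w]] .
  finally have "y' \<in> car (homology K3 d3 K2 d2 K1) (Suc n)" using y' by simp
  then have "y' \<in> msum (rel K2 (Suc n)) (d3 (Suc n) ` car K3 (Suc n))" using h1 by auto
  then obtain r3 u where r3: "r3 \<in> rel K2 (Suc n)" and u: "u \<in> car K3 (Suc n)" and ye: "y' = r3 + d3 (Suc n) u"
    by (auto elim!: msumE)
  have "y = (r3 + iota K2 n w) + d3 (Suc n) u" using ye unfolding y'_def by (simp add: algebra_simps)
  also have "\<dots> \<in> msum (msum (rel K2 (Suc n)) (iota K2 n ` car K2 n)) (d3 (Suc n) ` car K3 (Suc n))"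
    using r3 w u by (intro msumI) auto
  finally show "y \<in> rel (homology (fiD K3) (\<lambda>n. d3 (Suc n)) (fiD K2) (\<lambda>n. d2 (Suc n)) (fiD K1)) n"
    by simp
qed



definition sig :: "nat \<Rightarrow> nat \<Rightarrow> ('g::group_add) fimor" where
  "sig n k = (\<lambda>x. if 1 \<le> x \<and> x \<le> n then x else if n < x \<and> x \<le> n + k then Suc x else 0, \<lambda>_. 0)"

fun extb :: "nat \<Rightarrow> nat \<Rightarrow> nat \<Rightarrow> ('g::group_add) fimor \<Rightarrow> 'g fimor" where
  "extb 0 n m \<phi> = \<phi>"
| "extb (Suc b) n m \<phi> = extb b (Suc n) (Suc m) (ext1 n m \<phi>)"

lemma sig_0: "sig n 0 = fi_id n"
  unfolding sig_def fi_id_def by (auto simp: fun_eq_iff)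

lemma ext1_sig: "ext1 (n + k) (Suc (n + k)) (sig n k) = sig n (Suc k)"
  unfolding sig_def ext1_def by (auto simp: fun_eq_iff)

lemma extb_sig: "extb b (n + k) (Suc (n + k)) (sig n k :: ('g::group_add) fimor) = sig n (k + b)"
proof (induction b arbitrary: k)
  case 0 then show ?case by simp
next
  case (Suc b)
  have "extb (Suc b) (n + k) (Suc (n + k)) (sig n k :: 'g fimor) = extb b (n + Suc k) (Suc (n + Suc k)) (sig n (Suc k))"
    by (simp only: extb.simps ext1_sig add_Suc_right)
  also have "\<dots> = sig n (Suc k + b)" by (rule Suc.IH)
  finally show ?case by simp
qed

lemma act_fiDpow: "act (fiDpow b V) n m \<phi> = act V (n + b) (m + b) (extb b n m \<phi>)"
proof (induction b arbitrary: n m \<phi>)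
  case 0 then show ?case by (simp add: fiDpow_0)
next
  case (Suc b)
  show ?case by (simp add: fiDpow_Suc Suc.IH)
qed

lemma iota_fiDpow:
  fixes V :: "('g::group_add, 'v::ab_group_add) fimod"
  shows "iota (fiDpow b V) n = act V (n + b) (Suc (n + b)) (sig n b)"
proof -
  have "extb b n (Suc n) (fi_id n :: 'g fimor) = sig n b" using extb_sig[of b n 0] by (simp add: sig_0)
  then show ?thesis by (simp add: iota_def act_fiDpow)
qed

lemma sig_fst: "fst (sig n k) x = (if 1 \<le> x \<and> x \<le> n then x else if n < x \<and> x \<le> n + k then Suc x else 0)"
  "snd (sig n k) x = 0"
  by (simp_all add: sig_def)

lemma sig_hom: "sig n k \<in> fi_hom (n + k) (Suc (n + k))"
  unfolding fi_hom_iff sig_fst by (auto simp: inj_on_def sig_def split: if_splits)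

lemma sig_inj: "x \<le> n + k \<Longrightarrow> y \<le> n + k \<Longrightarrow> fst (sig n k) x = fst (sig n k) y \<Longrightarrow> x = y"
  unfolding sig_fst by (auto split: if_splits)

lemma sig_miss: "fst (sig n k) x \<noteq> Suc n"
  unfolding sig_fst by (auto split: if_splits)

lemma sig_high: "n < x \<Longrightarrow> x \<le> n + k \<Longrightarrow> fst (sig n k) x = Suc x"
  unfolding sig_fst by auto

lemma sig_high_inv: "fst (sig n k) x = Suc j \<Longrightarrow> n < j \<Longrightarrow> x = j"
  unfolding sig_fst by (auto split: if_splits)



definition EE :: "(nat \<times> 'v) set \<Rightarrow> nat \<Rightarrow> ((nat \<times> 'v) \<times> ('g::group_add) fimor) set" where
  "EE B m = {(b, \<phi>). b \<in> B \<and> \<phi> \<in> fi_hom (fst b) m}"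

definition ee :: "('g::group_add, 'v) fimod \<Rightarrow> nat \<Rightarrow> ((nat \<times> 'v) \<times> 'g fimor) \<Rightarrow> 'v" where
  "ee P m t = act P (fst (fst t)) m (snd t) (snd (fst t))"

definition mapT :: "('g::group_add) fimor \<Rightarrow> ((nat \<times> 'v) \<times> 'g fimor) \<Rightarrow> ((nat \<times> 'v) \<times> 'g fimor)" where
  "mapT \<psi> t = (fst t, fi_comp \<psi> (snd t))"

definition bad :: "nat \<Rightarrow> nat \<Rightarrow> ((nat \<times> 'v) \<times> ('g::group_add) fimor) \<Rightarrow> bool" where
  "bad b n t \<longleftrightarrow> \<not> {Suc n..n + b} \<subseteq> fst (snd t) ` {1..fst (fst t)}"

lemma EE_iff: "t \<in> EE B m \<longleftrightarrow> fst t \<in> B \<and> snd t \<in> fi_hom (fst (fst t)) m"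
  by (cases t) (auto simp: EE_def)

lemma hom_le: "\<phi> \<in> fi_hom k m \<Longrightarrow> fst \<phi> x \<le> m"
  using hom_in[of \<phi> k m x] hom_out[of \<phi> k m x] by (cases "x \<in> {1..k}") auto

lemma span_image_rep:
  assumes m: "module s" and v: "v \<in> module.span s (f ` I)"
  shows "\<exists>T c. finite T \<and> T \<subseteq> I \<and> v = (\<Sum>t\<in>T. s (c t) (f t))"
proof -
  from v obtain A r where A: "finite A" "A \<subseteq> f ` I" and ve: "v = (\<Sum>a\<in>A. s (r a) a)"
    unfolding module.span_explicit[OF m] by blast
  from A(2) obtain U where U: "U \<subseteq> I" "inj_on f U" "A = f ` U" using A(2)[unfolded subset_image_inj] by blast
  have fU: "finite U" using A(1) U finite_imageD by blast
  have "v = (\<Sum>t\<in>U. s (r (f t)) (f t))" using ve U by (simp add: sum.reindex)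
  then show ?thesis using fU U by (intro exI[of _ U] exI[of _ "\<lambda>t. r (f t)"]) auto
qed

lemma lin_on_sum:
  assumes m: "module s" and h: "lin_on s s S h" and S: "module.subspace s S" and T: "finite T"
    and f: "\<And>t. t \<in> T \<Longrightarrow> f t \<in> S"
  shows "h (sum f T) = (\<Sum>t\<in>T. h (f t))"
  using T f
proof (induction T rule: finite_induct)
  case empty then show ?case using lin_on_zero[OF h module.subspace_0[OF m S]] by simp
next
  case (insert x F)
  have "sum f F \<in> S" using module.subspace_sum[OF m S] insert by blast
  then show ?case using insert lin_on_add[OF h] by simp
qed

lemma msum_mono: "X \<subseteq> X' \<Longrightarrow> Y \<subseteq> Y' \<Longrightarrow> msum X Y \<subseteq> msum X' Y'"
  unfolding msum_def by blast

lemma rel_fiD_sub: "is_fimod s V \<Longrightarrow> rel V (Suc n) \<subseteq> rel (fiD V) n"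
  using subset_msum1[OF fimod_module image_subspace[OF fimod_module fimod_iota_lin fimod_car]] by simp

lemma rel_fiDpow_Suc:
  "rel (fiDpow (Suc b) P) n = msum (rel (fiDpow b P) (Suc n)) (act P (n + b) (Suc (n + b)) (sig n b) ` car P (n + b))"
  by (simp add: fiDpow_Suc iota_fiDpow car_fiDpow)

lemma fst_mapT[simp]: "fst (mapT \<psi> t) = fst t" by (simp add: mapT_def)
lemma snd_mapT: "snd (mapT \<psi> t) = fi_comp \<psi> (snd t)" by (simp add: mapT_def)

lemma mapT_EE: "t \<in> EE B m \<Longrightarrow> \<psi> \<in> fi_hom m l \<Longrightarrow> mapT \<psi> t \<in> EE B l"
  unfolding EE_iff snd_mapT fst_mapT using fi_comp_hom by blast

lemma mapT_sig_inj: "inj_on (mapT (sig n b)) (EE B (n + b))"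
proof (rule inj_onI)
  fix t1 t2 :: "(nat \<times> 'a) \<times> 'b::group_add fimor"
  assume t1: "t1 \<in> EE B (n + b)" and t2: "t2 \<in> EE B (n + b)" and e: "mapT (sig n b) t1 = mapT (sig n b) t2"
  have f: "fst t1 = fst t2" using e by (metis fst_mapT)
  have c: "fi_comp (sig n b) (snd t1) = fi_comp (sig n b) (snd t2)" using e by (metis snd_mapT)
  have h1: "snd t1 \<in> fi_hom (fst (fst t1)) (n + b)" and h2: "snd t2 \<in> fi_hom (fst (fst t2)) (n + b)"
    using t1 t2 by (auto simp: EE_iff)
  have "snd t1 = snd t2"
  proof (rule prod_eqI)
    show "fst (snd t1) = fst (snd t2)"
    proof
      fix x
      have "fst (fi_comp (sig n b) (snd t1)) x = fst (fi_comp (sig n b) (snd t2)) x" using c by simp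
      then have "fst (sig n b :: 'b fimor) (fst (snd t1) x) = fst (sig n b :: 'b fimor) (fst (snd t2) x)"
        unfolding fi_comp_def by simp
      then show "fst (snd t1) x = fst (snd t2) x" using sig_inj hom_le[OF h1] hom_le[OF h2] by blast
    qed
    show "snd (snd t1) = snd (snd t2)"
    proof
      fix x
      have "snd (fi_comp (sig n b) (snd t1)) x = snd (fi_comp (sig n b) (snd t2)) x" using c by simp
      then have "snd (snd t1) x + snd (sig n b :: 'b fimor) (fst (snd t1) x) = snd (snd t2) x + snd (sig n b :: 'b fimor) (fst (snd t2) x)"
        unfolding fi_comp_def by simp
      then show "snd (snd t1) x = snd (snd t2) x" by (simp add: sig_fst)
    qed
  qed
  then show "t1 = t2" using f by (simp add: prod_eq_iff)
qed

lemma img_mapT: "fst (snd (mapT \<psi> t)) ` X = fst \<psi> ` (fst (snd t) ` X)"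
  by (auto simp: snd_mapT fi_comp_def)

lemma mapT_bad:
  fixes t :: "(nat \<times> 'v) \<times> ('g::group_add) fimor"
  shows "bad b n t \<Longrightarrow> bad b (Suc n) (mapT (sig n b) t)"
proof -
  assume "bad b n t"
  then obtain j where j: "j \<in> {Suc n..n + b}" "j \<notin> fst (snd t) ` {1..fst (fst t)}" unfolding bad_def by blast
  have "Suc j \<notin> fst (sig n b :: 'g fimor) ` (fst (snd t) ` {1..fst (fst t)})"
  proof
    assume "Suc j \<in> fst (sig n b :: 'g fimor) ` (fst (snd t) ` {1..fst (fst t)})"
    then obtain y where y: "y \<in> fst (snd t) ` {1..fst (fst t)}" "fst (sig n b :: 'g fimor) y = Suc j" by force
    have "y = j" using sig_high_inv[OF y(2)] j(1) by simp
    then show False using y j by simp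
  qed
  moreover have "Suc j \<in> {Suc (Suc n)..Suc n + b}" using j by auto
  ultimately show ?thesis unfolding bad_def img_mapT fst_mapT by blast
qed

lemma mapT_good:
  fixes t :: "(nat \<times> 'v) \<times> ('g::group_add) fimor"
  shows "\<not> bad b n t \<Longrightarrow> \<not> bad b (Suc n) (mapT (sig n b) t)"
proof -
  assume "\<not> bad b n t"
  then have sub: "{Suc n..n + b} \<subseteq> fst (snd t) ` {1..fst (fst t)}" unfolding bad_def by blast
  have "{Suc (Suc n)..Suc n + b} \<subseteq> fst (sig n b :: 'g fimor) ` (fst (snd t) ` {1..fst (fst t)})"
  proof
    fix j' assume j': "j' \<in> {Suc (Suc n)..Suc n + b}"
    then obtain j where j: "j' = Suc j" "j \<in> {Suc n..n + b}" by (cases j') auto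
    have "fst (sig n b :: 'g fimor) j = j'" using sig_high[of n j b] j by auto
    then show "j' \<in> fst (sig n b :: 'g fimor) ` (fst (snd t) ` {1..fst (fst t)})" using sub j(2) by blast
  qed
  then show ?thesis unfolding bad_def img_mapT fst_mapT by simp
qed

lemma mapT_bad_Suc:
  fixes t :: "(nat \<times> 'v) \<times> ('g::group_add) fimor"
  shows "bad (Suc b) n (mapT (sig n b) t)"
proof -
  have a: "Suc n \<notin> fst (sig n b :: 'g fimor) ` (fst (snd t) ` {1..fst (fst t)})" using sig_miss by (metis imageE)
  have b: "Suc n \<in> {Suc n..n + Suc b}" by simp
  show ?thesis unfolding bad_def img_mapT fst_mapT using a b by blast
qed



definition gfun :: "nat \<Rightarrow> nat \<Rightarrow> nat" where "gfun n v = (if v \<le> n then v else v - 1)"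

lemma gfun_props:
  assumes "1 \<le> v" "v \<le> Suc (n + b)" "v \<noteq> Suc n"
  shows "1 \<le> gfun n v" "gfun n v \<le> n + b" "fst (sig n b :: ('g::group_add) fimor) (gfun n v) = v"
  using assms unfolding gfun_def sig_fst by auto

lemma gfun_inj:
  assumes "1 \<le> v" "v \<noteq> Suc n" "1 \<le> w" "w \<noteq> Suc n" "gfun n v = gfun n w"
  shows "v = w"
  using assms unfolding gfun_def by (auto split: if_splits)

definition unsig :: "nat \<Rightarrow> nat \<Rightarrow> ('g::group_add) fimor \<Rightarrow> 'g fimor" where
  "unsig n k \<phi> = (\<lambda>i. if i \<in> {1..k} then gfun n (fst \<phi> i) else 0, snd \<phi>)"

lemma unsig_props:
  fixes \<phi> :: "('g::group_add) fimor"
  assumes h: "\<phi> \<in> fi_hom k (Suc (n + b))" and miss: "Suc n \<notin> fst \<phi> ` {1..k}"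
  shows "unsig n k \<phi> \<in> fi_hom k (n + b)" "fi_comp (sig n b) (unsig n k \<phi>) = \<phi>"
proof -
  have v: "1 \<le> fst \<phi> i" "fst \<phi> i \<le> Suc (n + b)" "fst \<phi> i \<noteq> Suc n" if "i \<in> {1..k}" for i
  proof -
    show "1 \<le> fst \<phi> i" "fst \<phi> i \<le> Suc (n + b)" using hom_in[OF h that] by auto
    show "fst \<phi> i \<noteq> Suc n" using miss that by (metis image_eqI)
  qed
  have inj: "inj_on (fst \<phi>) {1..k}" using h unfolding fi_hom_iff by blast
  show "unsig n k \<phi> \<in> fi_hom k (n + b)"
    unfolding fi_hom_iff
  proof (intro conjI allI impI)
    show "fst (unsig n k \<phi>) ` {1..k} \<subseteq> {1..n + b}"
    proof
      fix y assume "y \<in> fst (unsig n k \<phi>) ` {1..k}"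
      then obtain i where i: "i \<in> {1..k}" "y = gfun n (fst \<phi> i)" unfolding unsig_def by force
      show "y \<in> {1..n + b}" using gfun_props(1,2)[OF v[OF i(1)]] i(2) by simp
    qed
  next
    show "inj_on (fst (unsig n k \<phi>)) {1..k}"
    proof (rule inj_onI)
      fix i j assume i: "i \<in> {1..k}" and j: "j \<in> {1..k}" and e: "fst (unsig n k \<phi>) i = fst (unsig n k \<phi>) j"
      have "gfun n (fst \<phi> i) = gfun n (fst \<phi> j)" using e i j unfolding unsig_def by simp
      then have "fst \<phi> i = fst \<phi> j" using gfun_inj v[OF i] v[OF j] by blast
      then show "i = j" using inj i j unfolding inj_on_def by blast
    qed
  next
    fix x assume "x \<notin> {1..k}"
    then show "fst (unsig n k \<phi>) x = 0" "snd (unsig n k \<phi>) x = 0"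
      using hom_out[OF h] unfolding unsig_def by auto
  qed
  show "fi_comp (sig n b) (unsig n k \<phi>) = \<phi>"
  proof (rule prod_eqI)
    show "fst (fi_comp (sig n b) (unsig n k \<phi>)) = fst \<phi>"
    proof
      fix i show "fst (fi_comp (sig n b) (unsig n k \<phi>)) i = fst \<phi> i"
      proof (cases "i \<in> {1..k}")
        case True
        then show ?thesis using gfun_props(3)[OF v[OF True]] unfolding fi_comp_def unsig_def by simp
      next
        case False
        then show ?thesis using hom_out[OF h False] unfolding fi_comp_def unsig_def by (auto simp: sig_fst)
      qed
    qed
    show "snd (fi_comp (sig n b) (unsig n k \<phi>)) = snd \<phi>"
      unfolding fi_comp_def unsig_def by (simp add: sig_fst fun_eq_iff)
  qed
qed

lemma bad_mono: "bad b (Suc n) t \<Longrightarrow> bad (Suc b) n t"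
proof -
  have "{Suc (Suc n)..Suc n + b} \<subseteq> {Suc n..n + Suc b}" by auto
  then show "bad b (Suc n) t \<Longrightarrow> bad (Suc b) n t" unfolding bad_def by blast
qed

lemma bad_drop: "bad (Suc b) n t \<Longrightarrow> Suc n \<in> fst (snd t) ` {1..fst (fst t)} \<Longrightarrow> bad b (Suc n) t"
  unfolding bad_def
proof -
  assume a: "\<not> {Suc n..n + Suc b} \<subseteq> fst (snd t) ` {1..fst (fst t)}" and b: "Suc n \<in> fst (snd t) ` {1..fst (fst t)}"
  show "\<not> {Suc (Suc n)..Suc n + b} \<subseteq> fst (snd t) ` {1..fst (fst t)}"
  proof
    assume c: "{Suc (Suc n)..Suc n + b} \<subseteq> fst (snd t) ` {1..fst (fst t)}"
    have "{Suc n..n + Suc b} \<subseteq> insert (Suc n) {Suc (Suc n)..Suc n + b}" by auto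
    then show False using a b c by blast
  qed
qed



context
  fixes s :: "'k::comm_ring_1 \<Rightarrow> 'v::ab_group_add \<Rightarrow> 'v" and P :: "('g::group_add, 'v) fimod"
    and B :: "(nat \<times> 'v) set"
  assumes FP: "is_fimod s P"
    and BB: "B \<subseteq> {(n, x). x \<in> car P n}"
    and SP: "\<And>m. car P m \<subseteq> msum (module.span s {act P n m \<phi> x | n x \<phi>. (n, x) \<in> B \<and> \<phi> \<in> fi_hom n m}) (rel P m)"
    and IN: "\<And>m T (c :: (nat \<times> 'v) \<times> 'g fimor \<Rightarrow> 'k). finite T \<Longrightarrow> T \<subseteq> {(b, \<phi>). b \<in> B \<and> \<phi> \<in> fi_hom (fst b) m} \<Longrightarrow>
        (\<Sum>t\<in>T. s (c t) (act P (fst (fst t)) m (snd t) (snd (fst t)))) \<in> rel P m \<Longrightarrow> \<forall>t\<in>T. c t = 0"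
begin

lemma md: "module s" using fimod_module[OF FP] .

lemma span_set_eq: "{act P n m \<phi> x | n x \<phi>. (n, x) \<in> B \<and> \<phi> \<in> fi_hom n m} = ee P m ` EE B m"
  unfolding ee_def EE_def by force

lemma ee_car: "t \<in> EE B m \<Longrightarrow> ee P m t \<in> car P m"
  unfolding ee_def EE_iff using BB fimod_act_car[OF FP] by (cases t) auto

lemma sumE_car: "finite T \<Longrightarrow> T \<subseteq> EE B m \<Longrightarrow> (\<Sum>t\<in>T. s (c t) (ee P m t)) \<in> car P m"
proof -
  assume T: "finite T" "T \<subseteq> EE B m"
  show ?thesis
  proof (rule module.subspace_sum[OF md fimod_car[OF FP]])
    fix t assume "t \<in> T"
    then have "ee P m t \<in> car P m" using T ee_car by blast
    then show "s (c t) (ee P m t) \<in> car P m" by (rule module.subspace_scale[OF md fimod_car[OF FP]])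
  qed
qed

lemma rep: "y \<in> car P m \<Longrightarrow> \<exists>T c. finite T \<and> T \<subseteq> EE B m \<and> y - (\<Sum>t\<in>T. s (c t) (ee P m t)) \<in> rel P m"
proof -
  assume y: "y \<in> car P m"
  have "y \<in> msum (module.span s {act P n m \<phi> x | n x \<phi>. (n, x) \<in> B \<and> \<phi> \<in> fi_hom n m}) (rel P m)"
    using SP[of m] y by (rule subsetD)
  then have "y \<in> msum (module.span s (ee P m ` EE B m)) (rel P m)" by (simp only: span_set_eq)
  then obtain v r where v: "v \<in> module.span s (ee P m ` EE B m)" and r: "r \<in> rel P m" and ye: "y = v + r"
    by (auto elim!: msumE)
  from span_image_rep[OF md v] obtain T c where "finite T" "T \<subseteq> EE B m" "v = (\<Sum>t\<in>T. s (c t) (ee P m t))"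
    by blast
  then show ?thesis using r ye by (intro exI[of _ T] exI[of _ c]) auto
qed

lemma indep: "finite T \<Longrightarrow> T \<subseteq> EE B m \<Longrightarrow> (\<Sum>t\<in>T. s (c t) (ee P m t)) \<in> rel P m \<Longrightarrow> t \<in> T \<Longrightarrow> c t = 0"
  using IN[of T m c] unfolding ee_def EE_def by blast

lemma comp_ee: "t \<in> EE B m \<Longrightarrow> \<psi> \<in> fi_hom m l \<Longrightarrow> act P m l \<psi> (ee P m t) - ee P l (mapT \<psi> t) \<in> rel P l"
proof -
  assume t: "t \<in> EE B m" and ps: "\<psi> \<in> fi_hom m l"
  have x: "snd (fst t) \<in> car P (fst (fst t))" using t BB unfolding EE_iff by auto
  have h: "snd t \<in> fi_hom (fst (fst t)) m" using t unfolding EE_iff by auto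
  have "act P (fst (fst t)) l (fi_comp \<psi> (snd t)) (snd (fst t)) - act P m l \<psi> (act P (fst (fst t)) m (snd t) (snd (fst t))) \<in> rel P l"
    using fimod_comp[OF FP h ps x] .
  then have "- (act P (fst (fst t)) l (fi_comp \<psi> (snd t)) (snd (fst t)) - act P m l \<psi> (act P (fst (fst t)) m (snd t) (snd (fst t)))) \<in> rel P l"
    using module.subspace_neg[OF md fimod_rel[OF FP]] by blast
  then show ?thesis unfolding ee_def mapT_def by simp
qed

lemma AP:
  assumes ps: "\<psi> \<in> fi_hom m l" and T: "finite T" "T \<subseteq> EE B m" and y: "y \<in> car P m"
    and yr: "y - (\<Sum>t\<in>T. s (c t) (ee P m t)) \<in> rel P m"
  shows "act P m l \<psi> y - (\<Sum>t\<in>T. s (c t) (ee P l (mapT \<psi> t))) \<in> rel P l"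
proof -
  note sub = module.subspace_add[OF md] module.subspace_diff[OF md] module.subspace_neg[OF md] module.subspace_scale[OF md]
    module.subspace_sum[OF md]
  let ?S = "\<Sum>t\<in>T. s (c t) (ee P m t)"
  have Sc: "?S \<in> car P m" using sumE_car[OF T] .
  have rc: "y - ?S \<in> car P m" using yr fimod_rel_car[OF FP] by blast
  have lin: "lin_on s s (car P m) (act P m l \<psi>)" using fimod_lin[OF FP ps] .
  have e1: "act P m l \<psi> y = act P m l \<psi> ?S + act P m l \<psi> (y - ?S)"
    using lin_on_add[OF lin Sc rc] by simp
  have e2: "act P m l \<psi> ?S = (\<Sum>t\<in>T. s (c t) (act P m l \<psi> (ee P m t)))"
  proof -
    have "act P m l \<psi> ?S = (\<Sum>t\<in>T. act P m l \<psi> (s (c t) (ee P m t)))"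
      by (rule lin_on_sum[OF md lin fimod_car[OF FP] T(1)])
         (use T(2) ee_car module.subspace_scale[OF md fimod_car[OF FP]] in blast)
    also have "\<dots> = (\<Sum>t\<in>T. s (c t) (act P m l \<psi> (ee P m t)))"
      using lin_on_scale[OF lin] ee_car T(2) by (intro sum.cong) auto
    finally show ?thesis .
  qed
  have e3: "(\<Sum>t\<in>T. s (c t) (act P m l \<psi> (ee P m t))) - (\<Sum>t\<in>T. s (c t) (ee P l (mapT \<psi> t)))
      = (\<Sum>t\<in>T. s (c t) (act P m l \<psi> (ee P m t) - ee P l (mapT \<psi> t)))"
    by (simp only: module.scale_right_diff_distrib[OF md] sum_subtractf)
  have "(\<Sum>t\<in>T. s (c t) (act P m l \<psi> (ee P m t) - ee P l (mapT \<psi> t))) \<in> rel P l"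
  proof (rule sub(5)[OF fimod_rel[OF FP]])
    fix t assume "t \<in> T"
    then have "act P m l \<psi> (ee P m t) - ee P l (mapT \<psi> t) \<in> rel P l" using comp_ee[OF _ ps] T(2) by blast
    then show "s (c t) (act P m l \<psi> (ee P m t) - ee P l (mapT \<psi> t)) \<in> rel P l"
      by (rule sub(4)[OF fimod_rel[OF FP]])
  qed
  moreover have "act P m l \<psi> (y - ?S) \<in> rel P l" using fimod_act_rel[OF FP ps yr] .
  ultimately have "(\<Sum>t\<in>T. s (c t) (act P m l \<psi> (ee P m t) - ee P l (mapT \<psi> t))) + act P m l \<psi> (y - ?S) \<in> rel P l"
    using sub(1)[OF fimod_rel[OF FP]] by blast
  then show ?thesis using e1 e2 e3 by (simp add: algebra_simps)
qed

lemma F2: "rel (fiDpow b P) n \<subseteq> msum (module.span s (ee P (n + b) ` {t \<in> EE B (n + b). bad b n t})) (rel P (n + b))"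
proof (induction b arbitrary: n)
  case 0
  show ?case using subset_msum2[OF md module.subspace_span[OF md]] by (simp add: fiDpow_0)
next
  case (Suc b)
  let ?Z = "msum (module.span s (ee P (n + Suc b) ` {t \<in> EE B (n + Suc b). bad (Suc b) n t})) (rel P (n + Suc b))"
  have Zs: "module.subspace s ?Z" by (rule msum_subspace[OF md module.subspace_span[OF md] fimod_rel[OF FP]])
  show ?case unfolding rel_fiDpow_Suc
  proof (rule msum_sub[OF md Zs])
    have "rel (fiDpow b P) (Suc n) \<subseteq> msum (module.span s (ee P (Suc n + b) ` {t \<in> EE B (Suc n + b). bad b (Suc n) t})) (rel P (Suc n + b))"
      by (rule Suc.IH)
    also have "\<dots> \<subseteq> ?Z"
    proof (rule msum_mono)
      have "{t \<in> EE B (Suc n + b). bad b (Suc n) t} \<subseteq> {t \<in> EE B (n + Suc b). bad (Suc b) n t}"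
        using bad_mono by auto
      then show "module.span s (ee P (Suc n + b) ` {t \<in> EE B (Suc n + b). bad b (Suc n) t})
          \<subseteq> module.span s (ee P (n + Suc b) ` {t \<in> EE B (n + Suc b). bad (Suc b) n t})"
        by (intro module.span_mono[OF md]) auto
      show "rel P (Suc n + b) \<subseteq> rel P (n + Suc b)" by simp
    qed
    finally show "rel (fiDpow b P) (Suc n) \<subseteq> ?Z" .
  next
    show "act P (n + b) (Suc (n + b)) (sig n b) ` car P (n + b) \<subseteq> ?Z"
    proof
      fix z assume "z \<in> act P (n + b) (Suc (n + b)) (sig n b) ` car P (n + b)"
      then obtain y where y: "y \<in> car P (n + b)" and z: "z = act P (n + b) (Suc (n + b)) (sig n b) y" by blast
      obtain T c where T: "finite T" "T \<subseteq> EE B (n + b)" and yr: "y - (\<Sum>t\<in>T. s (c t) (ee P (n + b) t)) \<in> rel P (n + b)"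
        using rep[OF y] by blast
      let ?S = "\<Sum>t\<in>T. s (c t) (ee P (Suc (n + b)) (mapT (sig n b) t))"
      have d: "z - ?S \<in> rel P (Suc (n + b))" using AP[OF sig_hom T y yr] z by simp
      have S: "?S \<in> module.span s (ee P (n + Suc b) ` {t \<in> EE B (n + Suc b). bad (Suc b) n t})"
      proof (rule module.span_sum[OF md])
        fix t assume "t \<in> T"
        then have tE: "t \<in> EE B (n + b)" using T(2) by blast
        have "mapT (sig n b) t \<in> EE B (Suc (n + b))" using mapT_EE[OF tE sig_hom] .
        then have "mapT (sig n b) t \<in> {t \<in> EE B (n + Suc b). bad (Suc b) n t}"
          using mapT_bad_Suc[of b n t] by simp
        then show "s (c t) (ee P (Suc (n + b)) (mapT (sig n b) t)) \<in> module.span s (ee P (n + Suc b) ` {t \<in> EE B (n + Suc b). bad (Suc b) n t})"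
          by (intro module.span_scale[OF md] module.span_base[OF md]) auto
      qed
      have "z = ?S + (z - ?S)" by simp
      also have "\<dots> \<in> ?Z" using S d by (intro msumI) auto
      finally show "z \<in> ?Z" .
    qed
  qed
qed

lemma F1: "t \<in> EE B (n + b) \<Longrightarrow> bad b n t \<Longrightarrow> ee P (n + b) t \<in> rel (fiDpow b P) n"
proof (induction b arbitrary: n t)
  case 0
  then show ?case by (simp add: bad_def)
next
  case (Suc b)
  show ?case
  proof (cases "Suc n \<in> fst (snd t) ` {1..fst (fst t)}")
    case True
    have "bad b (Suc n) t" using bad_drop[OF Suc.prems(2) True] .
    moreover have "t \<in> EE B (Suc n + b)" using Suc.prems(1) by simp
    ultimately have "ee P (Suc n + b) t \<in> rel (fiDpow b P) (Suc n)" using Suc.IH by blast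
    then show ?thesis using rel_fiD_sub[OF fimod_fiDpow[OF FP]] by (auto simp: fiDpow_Suc)
  next
    case False
    have h: "snd t \<in> fi_hom (fst (fst t)) (Suc (n + b))" and tB: "fst t \<in> B" using Suc.prems(1) by (auto simp: EE_iff)
    let ?p = "unsig n (fst (fst t)) (snd t)"
    have p: "?p \<in> fi_hom (fst (fst t)) (n + b)" and pc: "fi_comp (sig n b) ?p = snd t"
      using unsig_props[OF h False] by auto
    let ?t' = "(fst t, ?p)"
    have t': "?t' \<in> EE B (n + b)" using p tB by (simp add: EE_iff)
    have mt: "mapT (sig n b) ?t' = t" using pc by (simp add: mapT_def)
    have c: "act P (n + b) (Suc (n + b)) (sig n b) (ee P (n + b) ?t') - ee P (Suc (n + b)) t \<in> rel P (Suc (n + b))"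
      using comp_ee[OF t' sig_hom] mt by simp
    then have c': "ee P (Suc (n + b)) t - act P (n + b) (Suc (n + b)) (sig n b) (ee P (n + b) ?t') \<in> rel (fiDpow b P) (Suc n)"
      using module.subspace_neg[OF md fimod_rel[OF FP] c] rel_fiDpow[OF FP, of "Suc n" b] by auto
    have "ee P (n + Suc b) t = (ee P (Suc (n + b)) t - act P (n + b) (Suc (n + b)) (sig n b) (ee P (n + b) ?t'))
        + act P (n + b) (Suc (n + b)) (sig n b) (ee P (n + b) ?t')" by simp
    also have "\<dots> \<in> rel (fiDpow (Suc b) P) n"
      unfolding rel_fiDpow_Suc using c' ee_car[OF t'] by (intro msumI) auto
    finally show ?thesis .
  qed
qed


lemma inj_main:
  assumes x: "x \<in> car P (n + b)"
    and ix: "act P (n + b) (Suc (n + b)) (sig n b) x \<in> rel (fiDpow b P) (Suc n)"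
  shows "x \<in> rel (fiDpow b P) n"
proof -
  note sub = module.subspace_add[OF md] module.subspace_diff[OF md] module.subspace_neg[OF md]
    module.subspace_scale[OF md] module.subspace_sum[OF md]
  obtain T c where T: "finite T" "T \<subseteq> EE B (n + b)" and xr: "x - (\<Sum>t\<in>T. s (c t) (ee P (n + b) t)) \<in> rel P (n + b)"
    using rep[OF x] by blast
  define G where "G = {t \<in> T. \<not> bad b n t}"
  define Bd where "Bd = {t \<in> T. bad b n t}"
  have finG: "finite G" and finBd: "finite Bd" using T(1) unfolding G_def Bd_def by auto
  have TGB: "T = G \<union> Bd" and disj: "G \<inter> Bd = {}" unfolding G_def Bd_def by auto
  have GE: "G \<subseteq> EE B (n + b)" and BdE: "Bd \<subseteq> EE B (n + b)" using T(2) unfolding G_def Bd_def by auto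
  have claim: "c t = 0" if tG: "t \<in> G" for t
  proof -
    let ?m = "Suc (n + b)"
    let ?Bad = "{t \<in> EE B ?m. bad b (Suc n) t}"
    let ?SP = "module.span s (ee P ?m ` ?Bad)"
    let ?f = "\<lambda>t. s (c t) (ee P ?m (mapT (sig n b) t))"
    have "act P (n + b) ?m (sig n b) x \<in> msum ?SP (rel P ?m)"
      using F2[of b "Suc n"] ix by auto
    then obtain v \<rho> where v: "v \<in> ?SP" and \<rho>: "\<rho> \<in> rel P ?m" and ive: "act P (n + b) ?m (sig n b) x = v + \<rho>"
      by (auto elim!: msumE)
    have ap: "act P (n + b) ?m (sig n b) x - (\<Sum>t\<in>T. ?f t) \<in> rel P ?m"
      using AP[OF sig_hom T x xr] by simp
    have split: "(\<Sum>t\<in>T. ?f t) = (\<Sum>t\<in>G. ?f t) + (\<Sum>t\<in>Bd. ?f t)"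
      unfolding TGB using sum.union_disjoint[OF finG finBd disj] by simp
    have SBd: "(\<Sum>t\<in>Bd. ?f t) \<in> ?SP"
    proof (rule module.span_sum[OF md])
      fix t assume t: "t \<in> Bd"
      then have tE: "t \<in> EE B (n + b)" and tb: "bad b n t" using BdE unfolding Bd_def by auto
      have "mapT (sig n b) t \<in> ?Bad" using mapT_EE[OF tE sig_hom] mapT_bad[OF tb] by simp
      then show "?f t \<in> ?SP" by (intro module.span_scale[OF md] module.span_base[OF md]) auto
    qed
    define u where "u = v - (\<Sum>t\<in>Bd. ?f t)"
    have u: "u \<in> ?SP" unfolding u_def using module.span_diff[OF md v SBd] .
    have key: "(\<Sum>t\<in>G. ?f t) - u \<in> rel P ?m"
    proof -
      have "(\<Sum>t\<in>G. ?f t) - u = \<rho> - (act P (n + b) ?m (sig n b) x - (\<Sum>t\<in>T. ?f t))"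
        unfolding u_def split using ive by (simp add: algebra_simps)
      then show ?thesis using sub(2)[OF fimod_rel[OF FP] \<rho> ap] by simp
    qed
    obtain A c2 where A: "finite A" "A \<subseteq> ?Bad" and ue: "u = (\<Sum>a\<in>A. s (c2 a) (ee P ?m a))"
      using span_image_rep[OF md u] by blast
    let ?GS = "mapT (sig n b) ` G"
    have inj: "inj_on (mapT (sig n b)) G" using inj_on_subset[OF mapT_sig_inj GE] .
    have GSE: "?GS \<subseteq> EE B ?m" using mapT_EE[OF _ sig_hom] GE by blast
    have GSgood: "\<not> bad b (Suc n) w" if "w \<in> ?GS" for w
    proof -
      obtain t where t: "t \<in> G" "w = mapT (sig n b) t" using \<open>w \<in> ?GS\<close> by blast
      then have "\<not> bad b n t" unfolding G_def by blast
      then show ?thesis using mapT_good[of b n t] t(2) by simp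
    qed
    have disj2: "?GS \<inter> A = {}" using GSgood A(2) by blast
    define c' where "c' w = (if w \<in> ?GS then c (the_inv_into G (mapT (sig n b)) w) else - c2 w)" for w
    have c'G: "c' (mapT (sig n b) t) = c t" if "t \<in> G" for t
      unfolding c'_def using that the_inv_into_f_f[OF inj that] by auto
    have sGS: "(\<Sum>w\<in>?GS. s (c' w) (ee P ?m w)) = (\<Sum>t\<in>G. ?f t)"
      using sum.reindex[OF inj, of "\<lambda>w. s (c' w) (ee P ?m w)"] c'G by simp
    have sA: "(\<Sum>w\<in>A. s (c' w) (ee P ?m w)) = - u"
    proof -
      have "(\<Sum>w\<in>A. s (c' w) (ee P ?m w)) = (\<Sum>w\<in>A. - s (c2 w) (ee P ?m w))"
      proof (rule sum.cong)
        fix w assume "w \<in> A"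
        then have "w \<notin> ?GS" using disj2 by blast
        then show "s (c' w) (ee P ?m w) = - s (c2 w) (ee P ?m w)"
          unfolding c'_def using module.scale_minus_left[OF md] by simp
      qed simp
      then show ?thesis unfolding ue by (simp add: sum_negf)
    qed
    have tot: "(\<Sum>w\<in>?GS \<union> A. s (c' w) (ee P ?m w)) \<in> rel P ?m"
      using sum.union_disjoint[OF finite_imageI[OF finG] A(1) disj2, of "\<lambda>w. s (c' w) (ee P ?m w)"] sGS sA key
      by simp
    have "?GS \<union> A \<subseteq> EE B ?m" using GSE A(2) by blast
    then have "c' (mapT (sig n b) t) = 0"
      using indep[OF _ _ tot] finG A(1) tG by blast
    then show "c t = 0" using c'G[OF tG] by simp
  qed
  have SG: "(\<Sum>t\<in>G. s (c t) (ee P (n + b) t)) = 0" using claim module.scale_zero_left[OF md] by simp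
  have "(\<Sum>t\<in>T. s (c t) (ee P (n + b) t)) = (\<Sum>t\<in>G. s (c t) (ee P (n + b) t)) + (\<Sum>t\<in>Bd. s (c t) (ee P (n + b) t))"
    unfolding TGB using sum.union_disjoint[OF finG finBd disj] by simp
  then have xe: "x = (x - (\<Sum>t\<in>T. s (c t) (ee P (n + b) t))) + (\<Sum>t\<in>Bd. s (c t) (ee P (n + b) t))"
    using SG by simp
  have R: "module.subspace s (rel (fiDpow b P) n)" using fimod_rel[OF fimod_fiDpow[OF FP]] .
  have a1: "x - (\<Sum>t\<in>T. s (c t) (ee P (n + b) t)) \<in> rel (fiDpow b P) n"
    using xr rel_fiDpow[OF FP, of n b] by blast
  have a2: "(\<Sum>t\<in>Bd. s (c t) (ee P (n + b) t)) \<in> rel (fiDpow b P) n"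
  proof (rule sub(5)[OF R])
    fix t assume "t \<in> Bd"
    then have "t \<in> EE B (n + b)" "bad b n t" using BdE unfolding Bd_def by auto
    then show "s (c t) (ee P (n + b) t) \<in> rel (fiDpow b P) n" using F1 sub(4)[OF R] by blast
  qed
  show ?thesis using sub(1)[OF R a1 a2] xe by simp
qed

end



lemma free_inj:
  fixes s :: "'k::comm_ring_1 \<Rightarrow> 'v::ab_group_add \<Rightarrow> 'v" and P :: "('g::group_add, 'v) fimod"
  assumes FP: "is_fimod s P" and fr: "is_free s P"
    and x: "x \<in> car (fiDpow b P) n" and ix: "iota (fiDpow b P) n x \<in> rel (fiDpow b P) (Suc n)"
  shows "x \<in> rel (fiDpow b P) n"
proof -
  obtain B where BB: "B \<subseteq> {(n, x). x \<in> car P n}" and rest: "\<forall>m.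
     car P m \<subseteq> msum (module.span s {act P n m \<phi> x | n x \<phi>. (n, x) \<in> B \<and> \<phi> \<in> fi_hom n m}) (rel P m) \<and>
     (\<forall>T (c :: (nat \<times> 'v) \<times> 'g fimor \<Rightarrow> 'k).
        finite T \<and> T \<subseteq> {(b, \<phi>). b \<in> B \<and> \<phi> \<in> fi_hom (fst b) m} \<and>
        (\<Sum>t\<in>T. s (c t) (act P (fst (fst t)) m (snd t) (snd (fst t)))) \<in> rel P m
        \<longrightarrow> (\<forall>t\<in>T. c t = 0))"
    using fr unfolding is_free_def by blast
  have SP: "\<And>m. car P m \<subseteq> msum (module.span s {act P n m \<phi> x | n x \<phi>. (n, x) \<in> B \<and> \<phi> \<in> fi_hom n m}) (rel P m)"
    using rest by blast
  have IN: "\<And>m T (c :: (nat \<times> 'v) \<times> 'g fimor \<Rightarrow> 'k). finite T \<Longrightarrow> T \<subseteq> {(b, \<phi>). b \<in> B \<and> \<phi> \<in> fi_hom (fst b) m} \<Longrightarrow>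
        (\<Sum>t\<in>T. s (c t) (act P (fst (fst t)) m (snd t) (snd (fst t)))) \<in> rel P m \<Longrightarrow> \<forall>t\<in>T. c t = 0"
    using rest by blast
  have x': "x \<in> car P (n + b)" using x by (simp add: car_fiDpow)
  have ix': "act P (n + b) (Suc (n + b)) (sig n b) x \<in> rel (fiDpow b P) (Suc n)" using ix by (simp add: iota_fiDpow)
  show ?thesis using inj_main[OF FP BB SP IN x' ix'] .
qed



definition supp :: "(nat \<Rightarrow> ('g::group_add, 'p::ab_group_add) fimod) \<Rightarrow> (nat \<Rightarrow> nat \<Rightarrow> 'p \<Rightarrow> 'p) \<Rightarrow> nat \<Rightarrow> nat \<Rightarrow> nat \<Rightarrow> bool" where
  "supp P d b i n \<longleftrightarrow> \<not> car (homology (fiDpow b (P (Suc i))) (fiDpow_map b (d (Suc i)))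
      (fiDpow b (P i)) (fiDpow_map b (d i)) (fiDpow b (P (i - 1)))) n
    \<subseteq> rel (homology (fiDpow b (P (Suc i))) (fiDpow_map b (d (Suc i)))
      (fiDpow b (P i)) (fiDpow_map b (d i)) (fiDpow b (P (i - 1)))) n"

lemma derived_deg_supp: "derived_deg P d b i = Sup {ereal (real n) | n. supp P d b i n}"
  unfolding derived_deg_def fdeg_def supp_def by simp

lemma fr_fimod: "free_resolution sV V sP P d eps \<Longrightarrow> is_fimod sP (P i)"
  unfolding free_resolution_def by blast
lemma fr_free: "free_resolution sV V sP P d eps \<Longrightarrow> is_free sP (P i)"
  unfolding free_resolution_def by blast
lemma fr_morph: "free_resolution sV V sP P d eps \<Longrightarrow> fi_morph sP (P (Suc i)) sP (P i) (d (Suc i))"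
  unfolding free_resolution_def by blast
lemma fr_exact: "free_resolution sV V sP P d eps \<Longrightarrow>
   exact_at (P (Suc (Suc i))) (d (Suc (Suc i))) (P (Suc i)) (d (Suc i)) (P i)"
  unfolding free_resolution_def by blast

lemma base0:
  assumes fr: "free_resolution sV V sP P d eps" and i: "1 \<le> i"
  shows "\<not> supp P d 0 i n"
proof -
  obtain j where j: "i = Suc j" using i by (cases i) auto
  have ex: "exact_at (P (Suc (Suc j))) (d (Suc (Suc j))) (P (Suc j)) (d (Suc j)) (P j)" using fr_exact[OF fr] .
  then have "{y \<in> car (P (Suc j)) n. d (Suc j) n y \<in> rel (P j) n} \<subseteq> msum (d (Suc (Suc j)) n ` car (P (Suc (Suc j))) n) (rel (P (Suc j)) n)"
    unfolding exact_at_def by blast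
  then show ?thesis unfolding supp_def j by (simp add: fiDpow_0 fiDpow_map_0 msum_commute)
qed

lemma recur:
  assumes fr: "free_resolution sV V sP P d eps" and i: "2 \<le> i" and sp: "supp P d (Suc b) i n"
  shows "supp P d b i (Suc n) \<or> supp P d b (i - 1) n"
proof (rule ccontr)
  assume "\<not> (supp P d b i (Suc n) \<or> supp P d b (i - 1) n)"
  then have n1: "\<not> supp P d b i (Suc n)" and n2: "\<not> supp P d b (i - 1) n" by auto
  obtain j where j: "i = Suc (Suc j)" using i by (metis add_2_eq_Suc le_Suc_ex)
  let ?K0 = "fiDpow b (P j)" and ?K1 = "fiDpow b (P (Suc j))" and ?K2 = "fiDpow b (P (Suc (Suc j)))"
    and ?K3 = "fiDpow b (P (Suc (Suc (Suc j))))"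
  let ?d1 = "fiDpow_map b (d (Suc j))" and ?d2 = "fiDpow_map b (d (Suc (Suc j)))"
    and ?d3 = "fiDpow_map b (d (Suc (Suc (Suc j))))"
  have F: "is_fimod sP (fiDpow b (P k))" for k using fimod_fiDpow[OF fr_fimod[OF fr]] .
  have M: "fi_morph sP (fiDpow b (P (Suc k))) sP (fiDpow b (P k)) (fiDpow_map b (d (Suc k)))" for k
    using morph_fiDpow[OF fr_morph[OF fr] fr_fimod[OF fr] fr_fimod[OF fr]] .
  have dd: "?d1 m (?d2 m x) \<in> rel ?K0 m" if x: "x \<in> car ?K2 m" for m x
  proof -
    have "x \<in> car (P (Suc (Suc j))) (m + b)" using x by (simp add: car_fiDpow)
    then have "d (Suc j) (m + b) (d (Suc (Suc j)) (m + b) x) \<in> rel (P j) (m + b)"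
      using fr_exact[OF fr, of j] unfolding exact_at_def by blast
    then show ?thesis using rel_fiDpow[OF fr_fimod[OF fr]] by (auto simp: fiDpow_map_def)
  qed
  have inj: "x \<in> rel ?K0 n" if "x \<in> car ?K0 n" "iota ?K0 n x \<in> rel ?K0 (Suc n)" for x
    using free_inj[OF fr_fimod[OF fr] fr_free[OF fr] that] .
  have h1: "car (homology ?K3 ?d3 ?K2 ?d2 ?K1) (Suc n) \<subseteq> rel (homology ?K3 ?d3 ?K2 ?d2 ?K1) (Suc n)"
    using n1 unfolding supp_def j by simp
  have h2: "car (homology ?K2 ?d2 ?K1 ?d1 ?K0) n \<subseteq> rel (homology ?K2 ?d2 ?K1 ?d1 ?K0) n"
    using n2 unfolding supp_def j by simp
  have "car (homology (fiD ?K3) (\<lambda>n. ?d3 (Suc n)) (fiD ?K2) (\<lambda>n. ?d2 (Suc n)) (fiD ?K1)) n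
       \<subseteq> rel (homology (fiD ?K3) (\<lambda>n. ?d3 (Suc n)) (fiD ?K2) (\<lambda>n. ?d2 (Suc n)) (fiD ?K1)) n"
    by (rule step[OF F F F F M M M dd inj h1 h2])
  then have "\<not> supp P d (Suc b) i n"
    unfolding supp_def j by (simp add: fiDpow_Suc fiDpow_map_Suc)
  then show False using sp by simp
qed

lemma bound:
  assumes fr: "free_resolution sV V sP P d eps"
  shows "1 \<le> a \<Longrightarrow> 1 \<le> i \<Longrightarrow> supp P d a i n \<Longrightarrow> ereal (real n + real a + 1 - real i) \<le> dwidth P d"
proof (induction a arbitrary: i n)
  case 0 then show ?case by simp
next
  case (Suc a')
  show ?case
  proof (cases "i = 1")
    case True
    have "ereal (real n) \<le> derived_deg P d (Suc a') 1"
      unfolding derived_deg_supp using Suc.prems(3) True by (auto intro: Sup_upper)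
    then have "ereal (real n) + ereal (real (Suc a')) \<le> derived_deg P d (Suc a') 1 + ereal (real (Suc a'))"
      by (rule add_right_mono)
    also have "\<dots> \<le> dwidth P d" unfolding dwidth_def by (rule SUP_upper) auto
    finally show ?thesis using True by (simp add: algebra_simps)
  next
    case False
    then have i2: "2 \<le> i" using Suc.prems(2) by simp
    from recur[OF fr i2 Suc.prems(3)] have "supp P d a' i (Suc n) \<or> supp P d a' (i - 1) n" .
    then show ?thesis
    proof
      assume s: "supp P d a' i (Suc n)"
      have a': "1 \<le> a'" using s base0[OF fr Suc.prems(2)] by (cases a') auto
      have "ereal (real (Suc n) + real a' + 1 - real i) \<le> dwidth P d" using Suc.IH[OF a' Suc.prems(2) s] .
      then show ?thesis by (simp add: algebra_simps)
    next
      assume s: "supp P d a' (i - 1) n"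
      have i1: "1 \<le> i - 1" using i2 by simp
      have a': "1 \<le> a'" using s base0[OF fr i1] by (cases a') auto
      have "ereal (real n + real a' + 1 - real (i - 1)) \<le> dwidth P d" using Suc.IH[OF a' i1 s] .
      then show ?thesis using i2 by (simp add: algebra_simps of_nat_diff)
    qed
  qed
qed

theorem mainTheorem10:
  fixes sV :: "'k::comm_ring_1 \<Rightarrow> 'v::ab_group_add \<Rightarrow> 'v"
    and V :: "('g::group_add, 'v) fimod"
    and sM :: "'k \<Rightarrow> 'm::ab_group_add \<Rightarrow> 'm"
    and M :: "('g, 'm) fimod"
    and \<pi> :: "nat \<Rightarrow> 'm \<Rightarrow> 'v"
    and sP :: "'k \<Rightarrow> 'p::ab_group_add \<Rightarrow> 'p"
    and P :: "nat \<Rightarrow> ('g, 'p) fimod"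
    and d :: "nat \<Rightarrow> nat \<Rightarrow> 'p \<Rightarrow> 'p"
    and eps :: "nat \<Rightarrow> 'p \<Rightarrow> 'v"
  assumes "presented_fin_by sM M \<pi> sV V"
    and "free_resolution sV V sP P d eps"
    and "a \<ge> 1" and "i \<ge> 1"
  shows "derived_deg P d a i \<le> dwidth P d - 1 + ereal (real i) - ereal (real a)"
proof -
  have b: "ereal (real n) \<le> dwidth P d - 1 + ereal (real i) - ereal (real a)" if "supp P d a i n" for n
  proof -
    have h: "ereal (real n + real a + 1 - real i) \<le> dwidth P d" using bound[OF assms(2) assms(3) assms(4) that] .
    show ?thesis
    proof (cases "dwidth P d")
      case (real r)
      have e: "ereal r - 1 + ereal (real i) - ereal (real a) = ereal (r - 1 + real i - real a)"
        by (simp add: one_ereal_def)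
      show ?thesis using h unfolding real e by simp
    next
      case PInf
      then show ?thesis by simp
    next
      case MInf
      then show ?thesis using h by simp
    qed
  qed
  show ?thesis unfolding derived_deg_supp by (rule Sup_least) (use b in blast)
qed

end
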